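(* Let $G=(V,E)$ be a finite planar embedded graph, $\mathbf{p}$ a packing of $G$, and $V=V^+\sqcup V^-\sqcup V^=\sqcup V^0$ a partition. If $\mathbf{p}$ is second order rigid, then it is rigid.
   Context: A packing of $G=(V,E)$, $V=\{1,\dots,n\}$, is $\mathbf{p}=(x_1,y_1,r_1,\dots,x_n,y_n,r_n)\in\mathbb{R}^{3n}$, all $r_i>0$, with $(r_i+r_j)^2=(x_i-x_j)^2+(y_i-y_j)^2$ for all $(i,j)\in E$ and the neighbors of each vertex in the same counterclockwise order as in the embedding; $\mathbf{p}_i=(x_i,y_i)$. Partition: $V^+$ (radius may increase or stay), $V^-$ (may decrease or stay), $V^=$ (fixed), $V^0$ (free). An infinitesimal flex is $\mathbf{p}'$ with $(\mathbf{p}_i-\mathbf{p}_j)\cdot(\mathbf{p}_i'-\mathbf{p}_j')=(r_i+r_j)(r_i'+r_j')$ for all edges; proper if $r_i'\ge 0$ on $V^+$, $\le0$ on $V^-$, $=0$ on $V^=$; trivial if it is the derivative of a family of rigid motions (rotations/translations of centers, radii unchanged). For proper $\mathbf{p}'$, the modified partition is $\tilde V^+=\{i\in V^+:r_i'=0\}$, $\tilde V^-=\{i\in V^-:r_i'=0\}$, $\tilde V^==V^=$, $\tilde V^0$ the rest. $\mathbf{p}'$ is extendable if there is $\mathbf{p}''$ with $(\mathbf{p}_i-\mathbf{p}_j)\cdot(\mathbf{p}_i''-\mathbf{p}_j'')-(r_i+r_j)(r_i''+r_j'')=(r_i'+r_j')^2-(\mathbf{p}_i'-\mathbf{p}_j')\cdot(\mathbf{p}_i'-\mathbf{p}_j')$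 for all $(i,j)\in E$, and $r_i''\ge0$ on $\tilde V^+$, $\le 0$ on $\tilde V^-$, $=0$ on $\tilde V^=$. $\mathbf{p}$ is second order rigid if no nontrivial proper infinitesimal flex is extendable. A flex is an analytic path $\mathbf{p}(t)$, $t\in[0,1]$, of packings of $G$ with $\mathbf{p}(0)=\mathbf{p}$; it is proper if for all $t$, $r_i(t)\ge r_i$ on $V^+$, $r_i(t)\le r_i$ on $V^-$, $r_i(t)=r_i$ on $V^=$. $\mathbf{p}$ is rigid if every proper flex is a congruent motion (each $\mathbf{p}(t)$ is obtained from $\mathbf{p}$ by a Euclidean isometry of centers, radii unchanged). *)

theory Defs
  imports "HOL-Analysis.Analysis"
begin

text \<open>Vertices form a finite type 'v (V = UNIV).
  Edges: a symmetric irreflexive relation E (each undirected edge appears as both darts).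
  The planar embedding is given combinatorially by a rotation system: rot i lists the
  neighbours of i in counterclockwise order (cyclically).\<close>

type_synonym 'v cfg = "'v \<Rightarrow> complex \<times> real"

abbreviation ctr :: "'v cfg \<Rightarrow> 'v \<Rightarrow> complex" where "ctr p i \<equiv> fst (p i)"
abbreviation rad :: "'v cfg \<Rightarrow> 'v \<Rightarrow> real" where "rad p i \<equiv> snd (p i)"

definition simple_graph :: "('v \<times> 'v) set \<Rightarrow> bool" where
  "simple_graph E \<longleftrightarrow> sym E \<and> irrefl E"

definition rotation_system :: "('v \<times> 'v) set \<Rightarrow> ('v \<Rightarrow> 'v list) \<Rightarrow> bool" where
  "rotation_system E rot \<longleftrightarrow> (\<forall>i. distinct (rot i) \<and> set (rot i) = {j. (i, j) \<in> E})"

definition rot_next :: "('v \<Rightarrow> 'v list) \<Rightarrow> 'v \<Rightarrow> 'v \<Rightarrow> 'v" where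
  "rot_next rot v u =
     (let l = rot v; k = (THE k. k < length l \<and> l ! k = u) in l ! ((k + 1) mod length l))"

text \<open>Face-tracing permutation on darts; its orbits are the faces of the embedding.\<close>
definition face_step :: "('v \<Rightarrow> 'v list) \<Rightarrow> 'v \<times> 'v \<Rightarrow> 'v \<times> 'v" where
  "face_step rot d = (snd d, rot_next rot (snd d) (fst d))"

definition face_orbit :: "('v \<Rightarrow> 'v list) \<Rightarrow> 'v \<times> 'v \<Rightarrow> ('v \<times> 'v) set" where
  "face_orbit rot d = {(face_step rot ^^ k) d | k. True}"

text \<open>A rotation system is planar iff every connected component C with at least one edge
  satisfies Euler's formula |C| - |E_C| + |F_C| = 2.\<close>
definition planar_rotation :: "('v \<times> 'v) set \<Rightarrow> ('v \<Rightarrow> 'v list) \<Rightarrow> bool" where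
  "planar_rotation E rot \<longleftrightarrow>
     (\<forall>C \<in> UNIV // (E\<^sup>*). card C \<ge> 2 \<longrightarrow>
        int (card C) - int (card (E \<inter> (C \<times> C)) div 2)
          + int (card (face_orbit rot ` (E \<inter> (C \<times> C)))) = 2)"

definition planar_embedded_graph :: "('v \<times> 'v) set \<Rightarrow> ('v \<Rightarrow> 'v list) \<Rightarrow> bool" where
  "planar_embedded_graph E rot \<longleftrightarrow>
     simple_graph E \<and> rotation_system E rot \<and> planar_rotation E rot"

definition ccw_angle :: "complex \<Rightarrow> complex \<Rightarrow> real" where
  "ccw_angle u v = (if Arg (v / u) \<le> 0 then Arg (v / u) + 2 * pi else Arg (v / u))"

text \<open>The neighbours of i, in the cyclic order rot i, appear counterclockwise around the
  center of i exactly once (total turning angle 2 pi).\<close>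
definition ccw_order_ok :: "('v \<Rightarrow> 'v list) \<Rightarrow> 'v cfg \<Rightarrow> 'v \<Rightarrow> bool" where
  "ccw_order_ok rot p i \<longleftrightarrow>
     (let l = rot i; k = length l in
      k = 0 \<or>
      (\<Sum>a<k. ccw_angle (ctr p (l ! a) - ctr p i) (ctr p (l ! ((a + 1) mod k)) - ctr p i)) = 2 * pi)"

definition packing :: "('v \<times> 'v) set \<Rightarrow> ('v \<Rightarrow> 'v list) \<Rightarrow> 'v cfg \<Rightarrow> bool" where
  "packing E rot p \<longleftrightarrow>
     (\<forall>i. rad p i > 0) \<and>
     (\<forall>(i, j) \<in> E. (rad p i + rad p j)\<^sup>2 = (cmod (ctr p i - ctr p j))\<^sup>2) \<and>
     (\<forall>i. ccw_order_ok rot p i)"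

definition vertex_partition :: "'v set \<Rightarrow> 'v set \<Rightarrow> 'v set \<Rightarrow> 'v set \<Rightarrow> bool" where
  "vertex_partition Vp Vm Ve V0 \<longleftrightarrow>
     Vp \<union> Vm \<union> Ve \<union> V0 = UNIV \<and>
     Vp \<inter> Vm = {} \<and> Vp \<inter> Ve = {} \<and> Vp \<inter> V0 = {} \<and>
     Vm \<inter> Ve = {} \<and> Vm \<inter> V0 = {} \<and> Ve \<inter> V0 = {}"

definition inf_flex :: "('v \<times> 'v) set \<Rightarrow> 'v cfg \<Rightarrow> 'v cfg \<Rightarrow> bool" where
  "inf_flex E p q \<longleftrightarrow>
     (\<forall>(i, j) \<in> E. inner (ctr p i - ctr p j) (ctr q i - ctr q j)
                   = (rad p i + rad p j) * (rad q i + rad q j))"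

definition proper_inf :: "'v set \<Rightarrow> 'v set \<Rightarrow> 'v set \<Rightarrow> 'v cfg \<Rightarrow> bool" where
  "proper_inf Vp Vm Ve q \<longleftrightarrow>
     (\<forall>i\<in>Vp. rad q i \<ge> 0) \<and> (\<forall>i\<in>Vm. rad q i \<le> 0) \<and> (\<forall>i\<in>Ve. rad q i = 0)"

text \<open>Trivial infinitesimal flex: derivative at 0 of a family of rotations/translations
  of the centers (radii unchanged), i.e. c'_i = a + i*omega*c_i, r'_i = 0.\<close>
definition trivial_inf :: "'v cfg \<Rightarrow> 'v cfg \<Rightarrow> bool" where
  "trivial_inf p q \<longleftrightarrow>
     (\<exists>(a::complex) (\<omega>::real). \<forall>i. ctr q i = a + \<i> * complex_of_real \<omega> * ctr p i \<and> rad q i = 0)"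

definition extendable ::
  "('v \<times> 'v) set \<Rightarrow> 'v set \<Rightarrow> 'v set \<Rightarrow> 'v set \<Rightarrow> 'v cfg \<Rightarrow> 'v cfg \<Rightarrow> bool" where
  "extendable E Vp Vm Ve p q \<longleftrightarrow>
     (\<exists>s :: 'v cfg.
        (\<forall>(i, j) \<in> E.
           inner (ctr p i - ctr p j) (ctr s i - ctr s j) - (rad p i + rad p j) * (rad s i + rad s j)
           = (rad q i + rad q j)\<^sup>2 - inner (ctr q i - ctr q j) (ctr q i - ctr q j)) \<and>
        (\<forall>i \<in> {i \<in> Vp. rad q i = 0}. rad s i \<ge> 0) \<and>
        (\<forall>i \<in> {i \<in> Vm. rad q i = 0}. rad s i \<le> 0) \<and>
        (\<forall>i \<in> Ve. rad s i = 0))"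

definition second_order_rigid ::
  "('v \<times> 'v) set \<Rightarrow> 'v set \<Rightarrow> 'v set \<Rightarrow> 'v set \<Rightarrow> 'v cfg \<Rightarrow> bool" where
  "second_order_rigid E Vp Vm Ve p \<longleftrightarrow>
     (\<forall>q. inf_flex E p q \<and> proper_inf Vp Vm Ve q \<and> \<not> trivial_inf p q
          \<longrightarrow> \<not> extendable E Vp Vm Ve p q)"

definition real_analytic_on :: "(real \<Rightarrow> real) \<Rightarrow> real set \<Rightarrow> bool" where
  "real_analytic_on f S \<longleftrightarrow>
     (\<forall>t\<in>S. \<exists>\<delta>>0. \<exists>a :: nat \<Rightarrow> real.
        \<forall>s\<in>S. \<bar>s - t\<bar> < \<delta> \<longrightarrow> (\<lambda>n. a n * (s - t) ^ n) sums f s)"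

definition analytic_path :: "(real \<Rightarrow> 'v cfg) \<Rightarrow> bool" where
  "analytic_path P \<longleftrightarrow>
     (\<forall>i. real_analytic_on (\<lambda>t. Re (ctr (P t) i)) {0..1} \<and>
          real_analytic_on (\<lambda>t. Im (ctr (P t) i)) {0..1} \<and>
          real_analytic_on (\<lambda>t. rad (P t) i) {0..1})"

definition proper_flex ::
  "('v \<times> 'v) set \<Rightarrow> ('v \<Rightarrow> 'v list) \<Rightarrow> 'v set \<Rightarrow> 'v set \<Rightarrow> 'v set \<Rightarrow> 'v cfg
     \<Rightarrow> (real \<Rightarrow> 'v cfg) \<Rightarrow> bool" where
  "proper_flex E rot Vp Vm Ve p P \<longleftrightarrow>
     analytic_path P \<and> P 0 = p \<and>
     (\<forall>t\<in>{0..1}. packing E rot (P t) \<and>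
        (\<forall>i\<in>Vp. rad (P t) i \<ge> rad p i) \<and>
        (\<forall>i\<in>Vm. rad (P t) i \<le> rad p i) \<and>
        (\<forall>i\<in>Ve. rad (P t) i = rad p i))"

definition congruent_motion :: "'v cfg \<Rightarrow> (real \<Rightarrow> 'v cfg) \<Rightarrow> bool" where
  "congruent_motion p P \<longleftrightarrow>
     (\<forall>t\<in>{0..1}. \<exists>f :: complex \<Rightarrow> complex. (\<forall>x y. dist (f x) (f y) = dist x y) \<and>
        (\<forall>i. ctr (P t) i = f (ctr p i) \<and> rad (P t) i = rad p i))"

definition rigid ::
  "('v \<times> 'v) set \<Rightarrow> ('v \<Rightarrow> 'v list) \<Rightarrow> 'v set \<Rightarrow> 'v set \<Rightarrow> 'v set \<Rightarrow> 'v cfg \<Rightarrow> bool" where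
  "rigid E rot Vp Vm Ve p \<longleftrightarrow>
     (\<forall>P. proper_flex E rot Vp Vm Ve p P \<longrightarrow> congruent_motion p P)"

end

theory Submission
  imports Defs
begin

lemma eval_fps_subdeg:
  fixes F :: "real fps"
  assumes "norm t < fps_conv_radius F"
  shows "eval_fps F t = t ^ subdegree F * eval_fps (fps_shift (subdegree F) F) t"
proof (cases "t = 0")
  case True
  show ?thesis
  proof (cases "subdegree F = 0")
    case False
    then have "fps_nth F 0 = 0" by (intro nth_less_subdegree_zero) simp
    then show ?thesis using True False by (simp add: eval_fps_at_0)
  next
    case True
    then show ?thesis by simp
  qed 
next
  case False
  have "subdegree F \<le> subdegree F" by simp
  from eval_fps_shift[OF this assms] False
  show ?thesis by simp
qed

lemma ereal_pos_dense:
  assumes "0 < (R::ereal)"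
  obtains e where "0 < e" "ereal e < R"
proof -
  from ereal_dense2[OF assms] obtain z where "0 < ereal z" "ereal z < R" by blast
  then show ?thesis using that[of z] by simp
qed

lemma eventually_in_radius:
  fixes R :: ereal
  assumes "0 < R"
  shows "eventually (\<lambda>t::real. ereal (norm t) < R) (at 0)"
proof -
  obtain e where e: "0 < e" "ereal e < R" using ereal_pos_dense[OF assms] by blast
  have "eventually (\<lambda>t. norm t < e) (at (0::real))"
    unfolding eventually_at using e(1) by (intro exI[of _ e]) (auto simp: dist_norm)
  then show ?thesis
  proof (rule eventually_mono)
    fix t :: real assume "norm t < e"
    then have "ereal (norm t) < ereal e" by simp
    then show "ereal (norm t) < R" using e(2) by (rule less_trans)
  qed
qed

lemma fps_eventually_nz:
  fixes F :: "real fps"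
  assumes "fps_conv_radius F > 0" "F \<noteq> 0"
  shows "eventually (\<lambda>t. eval_fps F t \<noteq> 0) (at 0)"
proof -
  define G where "G = fps_shift (subdegree F) F"
  have G0: "fps_nth G 0 \<noteq> 0" using assms(2) unfolding G_def by simp
  have rG: "fps_conv_radius G > 0" using assms unfolding G_def by simp
  have "isCont (eval_fps G) 0" using rG continuous_eval_fps[of 0 G UNIV] by (simp add: zero_ereal_def)
  hence "(eval_fps G \<longlongrightarrow> fps_nth G 0) (at 0)" by (simp add: isCont_def eval_fps_at_0)
  hence ev1: "eventually (\<lambda>t. eval_fps G t \<noteq> 0) (at 0)"
    using G0 tendsto_imp_eventually_ne by blast
  have ev2: "eventually (\<lambda>t::real. t \<noteq> 0) (at 0)" by (simp add: eventually_at_filter)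
  from ev1 ev2 eventually_in_radius[OF assms(1)]
  show ?thesis
  proof (eventually_elim)
    case (elim t)
    then show ?case using eval_fps_subdeg[of t F] unfolding G_def by simp
  qed
qed

lemma fps_eventually_pos:
  fixes F :: "real fps"
  assumes "fps_conv_radius F > 0" "F \<noteq> 0" "fps_nth F (subdegree F) > 0"
  shows "eventually (\<lambda>t. eval_fps F t > 0) (at_right 0)"
proof -
  define G where "G = fps_shift (subdegree F) F"
  have G0: "fps_nth G 0 > 0" using assms(3) unfolding G_def by simp
  have rG: "fps_conv_radius G > 0" using assms unfolding G_def by simp
  have "isCont (eval_fps G) 0" using rG continuous_eval_fps[of 0 G UNIV] by (simp add: zero_ereal_def)
  hence "(eval_fps G \<longlongrightarrow> fps_nth G 0) (at 0)" by (simp add: isCont_def eval_fps_at_0)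
  hence "(eval_fps G \<longlongrightarrow> fps_nth G 0) (at_right 0)" by (rule filterlim_mono) (simp_all add: at_le)
  hence ev1: "eventually (\<lambda>t. eval_fps G t > 0) (at_right 0)"
    using G0 order_tendstoD(1) by blast
  have ev2: "eventually (\<lambda>t::real. t > 0) (at_right 0)" by (simp add: eventually_at_right_less)
  have ev3: "eventually (\<lambda>t::real. ereal (norm t) < fps_conv_radius F) (at_right 0)"
    using eventually_in_radius[OF assms(1)] by (rule filter_leD[rotated]) (simp add: at_le)
  from ev1 ev2 ev3
  show ?thesis
  proof (eventually_elim)
    case (elim t)
    then show ?case using eval_fps_subdeg[of t F] unfolding G_def by simp
  qed
qed

lemma fps_zero_if_eval_zero:
  fixes F :: "real fps"
  assumes "fps_conv_radius F > 0" "frequently (\<lambda>t. eval_fps F t = 0) (at 0)"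
  shows "F = 0"
  using fps_eventually_nz[OF assms(1)] assms(2) unfolding frequently_def
  by (auto elim: eventually_mono)

lemma real_analytic_local_fps:
  assumes "real_analytic_on f {0..1}" "t \<in> {0..1}"
  obtains \<delta> F where "\<delta> > 0" "ereal \<delta> < fps_conv_radius F"
    "\<And>h. \<bar>h\<bar> < \<delta> \<Longrightarrow> t + h \<in> {0..1} \<Longrightarrow> eval_fps F h = f (t + h)"
proof -
  from assms obtain \<delta>0 a where d0: "\<delta>0 > 0"
    and sa: "\<And>s. s \<in> {0..1} \<Longrightarrow> \<bar>s - t\<bar> < \<delta>0 \<Longrightarrow> (\<lambda>n. a n * (s - t) ^ n) sums f s"
    unfolding real_analytic_on_def by blast
  define \<delta> where "\<delta> = min (\<delta>0/2) (1/4)"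
  define x where "x = min (3*\<delta>0/4) (1/2)"
  define s' where "s' = (if t \<le> 1/2 then t + x else t - x)"
  have x: "\<delta> < x" "x < \<delta>0" unfolding x_def \<delta>_def using d0 by auto
  have s': "s' \<in> {0..1}" "\<bar>s' - t\<bar> = x" using assms(2) x d0 unfolding s'_def x_def by auto
  define F where "F = Abs_fps a"
  have "summable (\<lambda>n. a n * (s' - t) ^ n)" using sa[OF s'(1)] s'(2) x by (auto simp: sums_iff)
  hence "conv_radius a \<ge> norm (s' - t)" by (rule conv_radius_geI)
  hence r: "ereal x \<le> fps_conv_radius F" using s'(2) by (simp add: fps_conv_radius_def F_def)
  have "ereal \<delta> < ereal x" using x by simp
  also note r
  finally have r2: "ereal \<delta> < fps_conv_radius F" .
  show ?thesis
  proof (rule that[of \<delta> F])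
    show "\<delta> > 0" unfolding \<delta>_def using d0 by simp
    show "ereal \<delta> < fps_conv_radius F" by (fact r2)
    fix h assume h: "\<bar>h\<bar> < \<delta>" "t + h \<in> {0..1}"
    have "\<bar>(t + h) - t\<bar> < \<delta>0" using h x by simp
    from sa[OF h(2) this] have "(\<lambda>n. a n * h ^ n) sums f (t + h)" by simp
    then show "eval_fps F h = f (t + h)" unfolding eval_fps_def F_def by (simp add: sums_iff)
  qed
qed

definition loc_fps :: "(real \<Rightarrow> real) \<Rightarrow> bool" where
  "loc_fps f \<longleftrightarrow> (\<forall>t\<in>{0..1}. \<exists>\<delta>>0. \<exists>F. ereal \<delta> < fps_conv_radius F \<and>
      (\<forall>h. \<bar>h\<bar> < \<delta> \<and> t + h \<in> {0..1} \<longrightarrow> eval_fps F h = f (t + h)))"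

lemma loc_fps_analytic: "real_analytic_on f {0..1} \<Longrightarrow> loc_fps f"
  unfolding loc_fps_def
proof
  fix t :: real assume "real_analytic_on f {0..1}" "t \<in> {0..1}"
  from real_analytic_local_fps[OF this] show "\<exists>\<delta>>0. \<exists>F. ereal \<delta> < fps_conv_radius F \<and>
      (\<forall>h. \<bar>h\<bar> < \<delta> \<and> t + h \<in> {0..1} \<longrightarrow> eval_fps F h = f (t + h))" by metis
qed

lemma loc_fps_const: "loc_fps (\<lambda>t. c)"
  unfolding loc_fps_def
proof
  fix t :: real assume "t \<in> {0..1}"
  show "\<exists>\<delta>>0. \<exists>F. ereal \<delta> < fps_conv_radius F \<and>
      (\<forall>h. \<bar>h\<bar> < \<delta> \<and> t + h \<in> {0..1} \<longrightarrow> eval_fps F h = c)"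
    by (intro exI[of _ 1] conjI exI[of _ "fps_const c"]) auto
qed

lemma loc_fps_binop:
  assumes "loc_fps f" "loc_fps g"
    and op: "\<And>F G h. ereal (norm h) < fps_conv_radius F \<Longrightarrow> ereal (norm h) < fps_conv_radius G
       \<Longrightarrow> ereal (norm h) < fps_conv_radius (opF F G) \<and> eval_fps (opF F G) h = opr (eval_fps F h) (eval_fps G h)"
  shows "loc_fps (\<lambda>t. opr (f t) (g t))"
  unfolding loc_fps_def
proof
  fix t :: real assume t: "t \<in> {0..1}"
  from assms(1) t obtain d1 F where d1: "d1 > 0" "ereal d1 < fps_conv_radius F"
    "\<And>h. \<bar>h\<bar> < d1 \<Longrightarrow> t + h \<in> {0..1} \<Longrightarrow> eval_fps F h = f (t + h)"
    unfolding loc_fps_def by blast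
  from assms(2) t obtain d2 G where d2: "d2 > 0" "ereal d2 < fps_conv_radius G"
    "\<And>h. \<bar>h\<bar> < d2 \<Longrightarrow> t + h \<in> {0..1} \<Longrightarrow> eval_fps G h = g (t + h)"
    unfolding loc_fps_def by blast
  define d where "d = min d1 d2 / 2"
  have d: "d > 0" "d < d1" "d < d2" using d1 d2 unfolding d_def by auto
  have "ereal d < ereal d1" using d by simp
  then have rF: "ereal d < fps_conv_radius F" using d1(2) by (rule less_trans)
  have "ereal d < ereal d2" using d by simp
  then have rG: "ereal d < fps_conv_radius G" using d2(2) by (rule less_trans)
  have "ereal (norm d) < fps_conv_radius (opF F G)" using op[of d F G] rF rG d by simp
  moreover have "eval_fps (opF F G) h = opr (f (t + h)) (g (t + h))" if "\<bar>h\<bar> < d" "t + h \<in> {0..1}" for h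
  proof -
    have "ereal (norm h) < ereal d" using that by simp
    then have "ereal (norm h) < fps_conv_radius F" "ereal (norm h) < fps_conv_radius G"
      using rF rG by (meson less_trans)+
    then show ?thesis using op[of h F G] d1(3)[of h] d2(3)[of h] that d by simp
  qed
  ultimately show "\<exists>\<delta>>0. \<exists>H. ereal \<delta> < fps_conv_radius H \<and>
      (\<forall>h. \<bar>h\<bar> < \<delta> \<and> t + h \<in> {0..1} \<longrightarrow> eval_fps H h = opr (f (t + h)) (g (t + h)))"
    using d by (intro exI[of _ d] conjI exI[of _ "opF F G"]) auto
qed

lemma radius_min_less:
  fixes F G :: "real fps"
  assumes "ereal r < fps_conv_radius F" "ereal r < fps_conv_radius G"
    "fps_conv_radius H \<ge> min (fps_conv_radius F) (fps_conv_radius G)"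
  shows "ereal r < fps_conv_radius H"
  using assms by (meson min_less_iff_conj order.strict_trans2)

lemma loc_fps_add: "loc_fps f \<Longrightarrow> loc_fps g \<Longrightarrow> loc_fps (\<lambda>t. f t + g t)"
  by (rule loc_fps_binop[where opF = "(+)"])
     (auto intro: radius_min_less fps_conv_radius_add simp: eval_fps_add)

lemma loc_fps_diff: "loc_fps f \<Longrightarrow> loc_fps g \<Longrightarrow> loc_fps (\<lambda>t. f t - g t)"
  by (rule loc_fps_binop[where opF = "(-)"])
     (auto intro: radius_min_less fps_conv_radius_diff simp: eval_fps_diff)

lemma loc_fps_mult: "loc_fps f \<Longrightarrow> loc_fps g \<Longrightarrow> loc_fps (\<lambda>t. f t * g t)"
  by (rule loc_fps_binop[where opF = "(*)"])
     (auto intro: radius_min_less fps_conv_radius_mult simp: eval_fps_mult)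

lemma frequently_at0_of_left:
  assumes "m > 0" "\<And>h::real. h \<in> {-m<..<0} \<Longrightarrow> P h"
  shows "frequently P (at 0)"
  unfolding frequently_def
proof
  assume ev: "eventually (\<lambda>h. \<not> P h) (at 0)"
  have "eventually (\<lambda>h. \<not> P h) (at_left 0)" using ev by (rule filter_leD[rotated]) (simp add: at_le)
  moreover have "eventually (\<lambda>h. h \<in> {-m<..<0}) (at_left (0::real))"
    using assms(1) by (intro eventually_at_left_real) simp
  ultimately have "eventually (\<lambda>h. False) (at_left (0::real))"
    by eventually_elim (use assms(2) in auto)
  then show False by (simp add: trivial_limit_at_left_real)
qed

lemma loc_fps_identity:
  assumes "loc_fps f" "\<epsilon> > 0" "\<And>s. s \<in> {0..<\<epsilon>} \<Longrightarrow> f s = 0"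
  shows "\<And>s. s \<in> {0..1} \<Longrightarrow> f s = 0"
proof -
  define A where "A = {\<tau>\<in>{0..1}. \<forall>s\<in>{0..\<tau>}. f s = 0}"
  define T where "T = Sup A"
  have A0: "min (\<epsilon>/2) 1 \<in> A" using assms(2,3) unfolding A_def by auto
  have bdd: "bdd_above A" unfolding A_def by (rule bdd_aboveI[of _ 1]) auto
  have Ane: "A \<noteq> {}" using A0 by blast
  have T1: "T \<le> 1" unfolding T_def by (rule cSup_least[OF Ane]) (auto simp: A_def)
  have Tpos: "T > 0" unfolding T_def using A0 bdd assms(2)
    by (meson cSup_upper divide_pos_pos less_le_trans min_less_iff_conj zero_less_numeral zero_less_one)
  have below: "f s = 0" if "0 \<le> s" "s < T" for s
  proof -
    from that have "s < Sup A" unfolding T_def by simp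
    then obtain \<tau> where "\<tau> \<in> A" "s < \<tau>" using less_cSup_iff[of A s] A0 bdd by blast
    then show ?thesis using that unfolding A_def by auto
  qed
  have T01: "T \<in> {0..1}" using T1 Tpos by simp
  from assms(1) T01 obtain d F where d: "d > 0" "ereal d < fps_conv_radius F"
    "\<And>h. \<bar>h\<bar> < d \<Longrightarrow> T + h \<in> {0..1} \<Longrightarrow> eval_fps F h = f (T + h)"
    unfolding loc_fps_def by blast
  have "frequently (\<lambda>h. eval_fps F h = 0) (at 0)"
  proof (rule frequently_at0_of_left[of "min d T"])
    show "min d T > 0" using d Tpos by simp
    fix h assume h: "h \<in> {- min d T<..<0}"
    then have "eval_fps F h = f (T + h)" using d(3)[of h] T1 by auto
    also have "\<dots> = 0" using below[of "T + h"] h by auto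
    finally show "eval_fps F h = 0" .
  qed
  moreover have "fps_conv_radius F > 0" using d by (meson ereal_less(2) less_trans)
  ultimately have F0: "F = 0" using fps_zero_if_eval_zero by blast
  have above: "f (T + h) = 0" if "\<bar>h\<bar> < d" "T + h \<in> {0..1}" for h
    using d(3)[OF that] F0 by simp
  have "T = 1"
  proof (rule ccontr)
    assume "T \<noteq> 1"
    then have T1': "T < 1" using T1 by simp
    define \<tau> where "\<tau> = min 1 (T + d/2)"
    have "\<tau> \<in> A" unfolding A_def
    proof safe
      show "\<tau> \<in> {0..1}" unfolding \<tau>_def using Tpos d by auto
      fix s assume s: "s \<in> {0..\<tau>}"
      show "f s = 0"
      proof (cases "s < T")
        case True then show ?thesis using below s by auto
      next
        case False
        then show ?thesis using above[of "s - T"] s d unfolding \<tau>_def by auto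
      qed
    qed
    then have "\<tau> \<le> T" unfolding T_def using bdd by (rule cSup_upper)
    then show False unfolding \<tau>_def using T1' d by auto
  qed
  fix s :: real assume s: "s \<in> {0..1}"
  show "f s = 0"
  proof (cases "s < T")
    case True then show ?thesis using below s by auto
  next
    case False
    then have "s = T" using s \<open>T = 1\<close> by auto
    then show ?thesis using above[of 0] d T01 by simp
  qed
qed

lemma cmod_diff_sq: "(cmod (a - b))\<^sup>2 = (cmod a)\<^sup>2 + (cmod b)\<^sup>2 - 2 * Re (a * cnj b)"
  unfolding cmod_power2 by (simp add: power2_eq_square algebra_simps)

lemma isometry_extend:
  fixes x y :: "'a \<Rightarrow> complex"
  assumes H: "\<And>i j. cmod (y i - y j) = cmod (x i - x j)"
  shows "\<exists>f. (\<forall>a b. dist (f a) (f b) = dist a b) \<and> (\<forall>i. y i = f (x i))"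
proof (cases "\<forall>i j. x i = x j")
  case True
  define u where "u = (undefined :: 'a)"
  have "y i = y u" for i
  proof -
    have "x i = x u" using True by blast
    then show ?thesis using H[of i u] by simp
  qed
  moreover have "x i = x u" for i using True by blast
  ultimately have "y i = x i - x u + y u" for i
  proof -
    assume a1: "\<And>i. y i = y u" and a2: "\<And>i. x i = x u"
    have "x i - x u = 0" using a2[of i] by simp
    then show ?thesis using a1[of i] by simp
  qed
  then have "\<forall>i. y i = (\<lambda>z. z - x u + y u) (x i)" by blast
  moreover have "\<forall>a b. dist ((\<lambda>z. z - x u + y u) a) ((\<lambda>z. z - x u + y u) b) = dist a b"
    by (simp add: dist_norm)
  ultimately show ?thesis by (intro exI[of _ "\<lambda>z. z - x u + y u"] conjI) blast+
next
  case False
  then obtain u v where uv: "x u \<noteq> x v" by blast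
  define X where "X i = x i - x u" for i
  define Y where "Y i = y i - y u" for i
  have N: "cmod (Y i - Y j) = cmod (X i - X j)" for i j
    using H[of i j] unfolding X_def Y_def by simp
  have Nn: "cmod (Y i) = cmod (X i)" for i
    using H[of i u] unfolding X_def Y_def by simp
  have inner: "Re (X i * cnj (X j)) = Re (Y i * cnj (Y j))" for i j
  proof -
    have "(cmod (Y i - Y j))\<^sup>2 = (cmod (X i - X j))\<^sup>2" using N by simp
    then show ?thesis unfolding cmod_diff_sq using Nn[of i] Nn[of j] by simp
  qed
  define m where "m = cmod (X v)"
  have m: "m > 0" unfolding m_def X_def using uv by simp
  have mY: "cmod (Y v) = m" using Nn m_def by simp
  define e where "e = X v / of_real m"
  define e' where "e' = Y v / of_real m"
  have ne: "cmod e = 1" "cmod e' = 1" unfolding e_def e'_def using m mY m_def by (simp_all add: norm_divide)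
  have ee: "cnj e * e = 1" "cnj e' * e' = 1"
    using complex_norm_square[of e] complex_norm_square[of e'] ne by (simp_all add: mult.commute)
  define U where "U i = X i * cnj e" for i
  define V where "V i = Y i * cnj e'" for i
  have UU: "U i * cnj (U j) = X i * cnj (X j)" for i j
  proof -
    have "U i * cnj (U j) = X i * cnj (X j) * (cnj e * e)" unfolding U_def by (simp add: algebra_simps)
    then show ?thesis using ee by simp
  qed
  have VV: "V i * cnj (V j) = Y i * cnj (Y j)" for i j
  proof -
    have "V i * cnj (V j) = Y i * cnj (Y j) * (cnj e' * e')" unfolding V_def by (simp add: algebra_simps)
    then show ?thesis using ee by simp
  qed
  have Uv: "U v = of_real m"
  proof -
    have "U v = X v * cnj (X v) / of_real m" unfolding U_def e_def by simp
    also have "X v * cnj (X v) = of_real (m\<^sup>2)" using complex_norm_square[of "X v"] m_def by simp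
    finally show ?thesis using m by (simp add: power2_eq_square)
  qed
  have Vv: "V v = of_real m"
  proof -
    have "V v = Y v * cnj (Y v) / of_real m" unfolding V_def e'_def by simp
    also have "Y v * cnj (Y v) = of_real (m\<^sup>2)" using complex_norm_square[of "Y v"] mY by simp
    finally show ?thesis using m by (simp add: power2_eq_square)
  qed
  have RUV: "Re (U i * cnj (U j)) = Re (V i * cnj (V j))" for i j
    using inner[of i j] UU VV by simp
  have Re_eq: "Re (U i) = Re (V i)" for i
    using RUV[of i v] Uv Vv m by simp
  have nUV: "cmod (U i) = cmod (V i)" for i
    unfolding U_def V_def using ne Nn by (simp add: norm_mult)
  have ImProd: "Im (U i) * Im (U j) = Im (V i) * Im (V j)" for i j
    using RUV[of i j] Re_eq[of i] Re_eq[of j] by simp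
  have ImSq: "Im (U i) ^ 2 = Im (V i) ^ 2" for i
    using ImProd[of i i] by (simp add: power2_eq_square)
  have dich: "(\<forall>i. Im (V i) = Im (U i)) \<or> (\<forall>i. Im (V i) = - Im (U i))"
  proof (rule ccontr)
    assume "\<not> ?thesis"
    then obtain i j where ij: "Im (V i) \<noteq> Im (U i)" "Im (V j) \<noteq> - Im (U j)" by blast
    from ImSq[of i] ij(1) have i': "Im (V i) = - Im (U i)" "Im (U i) \<noteq> 0"
      by (auto simp: power2_eq_iff)
    from ImSq[of j] ij(2) have j': "Im (V j) = Im (U j)" "Im (U j) \<noteq> 0"
      by (auto simp: power2_eq_iff)
    from ImProd[of i j] i' j' show False by simp
  qed
  have Yi: "Y i = V i * e'" for i
    unfolding V_def using ee by (simp add: mult.assoc)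
  have yY: "y i = y u + Y i" for i unfolding Y_def by simp
  have xX: "X i = x i - x u" for i unfolding X_def by simp
  from dich show ?thesis
  proof
    assume A: "\<forall>i. Im (V i) = Im (U i)"
    have VU: "V i = U i" for i using A Re_eq by (simp add: complex_eq_iff)
    define k where "k = cnj e * e'"
    have nk: "cmod k = 1" unfolding k_def using ne by (simp add: norm_mult)
    show ?thesis
    proof (intro exI[of _ "\<lambda>z. y u + (z - x u) * k"] conjI allI)
      fix a b
      have "(y u + (a - x u) * k) - (y u + (b - x u) * k) = (a - b) * k"
        by (simp add: algebra_simps)
      then show "dist (y u + (a - x u) * k) (y u + (b - x u) * k) = dist a b"
        unfolding dist_norm using nk by (simp add: norm_mult)
    next
      fix i show "y i = y u + (x i - x u) * k"
        using yY[of i] Yi[of i] VU[of i] unfolding U_def k_def X_def by (simp add: mult.assoc)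
    qed
  next
    assume B: "\<forall>i. Im (V i) = - Im (U i)"
    have VU: "V i = cnj (U i)" for i using B Re_eq by (simp add: complex_eq_iff)
    define k where "k = e * e'"
    have nk: "cmod k = 1" unfolding k_def using ne by (simp add: norm_mult)
    show ?thesis
    proof (intro exI[of _ "\<lambda>z. y u + cnj (z - x u) * k"] conjI allI)
      fix a b
      have "(y u + cnj (a - x u) * k) - (y u + cnj (b - x u) * k) = cnj (a - b) * k"
        by (simp add: algebra_simps)
      then show "dist (y u + cnj (a - x u) * k) (y u + cnj (b - x u) * k) = dist a b"
        unfolding dist_norm using nk complex_mod_cnj[of "a - b"] by (simp add: norm_mult del: complex_cnj_diff)
    next
      fix i show "y i = y u + cnj (x i - x u) * k"
        using yY[of i] Yi[of i] VU[of i] unfolding U_def k_def X_def by (simp add: mult.assoc)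
    qed
  qed
qed

locale normal =
  fixes X Y :: "'v \<Rightarrow> real fps" and u v :: 'v
  assumes uv: "(fps_nth (X v) 0 - fps_nth (X u) 0)\<^sup>2 + (fps_nth (Y v) 0 - fps_nth (Y u) 0)\<^sup>2 > 0"
begin

definition "ax = fps_nth (X v) 0 - fps_nth (X u) 0"
definition "ay = fps_nth (Y v) 0 - fps_nth (Y u) 0"
definition "L = sqrt (ax\<^sup>2 + ay\<^sup>2)"
definition "Dx = X v - X u"
definition "Dy = Y v - Y u"
definition "N = Dx * Dx + Dy * Dy"
definition "S = fps_radical (\<lambda>k x. sqrt x) 2 N"
definition "Wx = fps_const (1 / L) * (fps_const ax * Dx + fps_const ay * Dy) * inverse S"
definition "Wy = fps_const (1 / L) * (fps_const ay * Dx - fps_const ax * Dy) * inverse S"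
definition "Xn i = fps_const (fps_nth (X u) 0) + (X i - X u) * Wx - (Y i - Y u) * Wy" for i
definition "Yn i = fps_const (fps_nth (Y u) 0) + (X i - X u) * Wy + (Y i - Y u) * Wx" for i

lemma L_pos: "L > 0"
  using uv unfolding L_def ax_def ay_def by simp

lemma axy_pos: "ax * ax + ay * ay > 0"
  using uv unfolding ax_def ay_def by (simp add: power2_eq_square)

lemma axy_nz: "ax \<noteq> 0 \<or> ay \<noteq> 0"
  using axy_pos by auto

lemma L_sq: "L * L = ax\<^sup>2 + ay\<^sup>2"
  unfolding L_def by simp

lemma N0: "fps_nth N 0 = ax\<^sup>2 + ay\<^sup>2"
  unfolding N_def Dx_def Dy_def ax_def ay_def by (simp add: power2_eq_square)

lemma S_sq: "S * S = N"
proof -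
  have "fps_nth N 0 \<noteq> 0" using N0 axy_pos axy_nz by (simp add: power2_eq_square)
  moreover have "(sqrt (fps_nth N 0)) ^ Suc 1 = fps_nth N 0" using N0 by simp
  ultimately have "fps_radical (\<lambda>k x. sqrt x) (Suc 1) N ^ Suc 1 = N"
    using power_radical[of N "\<lambda>k x. sqrt x" 1] by simp
  then show ?thesis unfolding S_def by (simp add: power2_eq_square numeral_2_eq_2)
qed

lemma S0: "fps_nth S 0 = L"
  unfolding S_def L_def using N0 by simp

lemma S_inv: "S * inverse S = 1"
  using S0 L_pos by (intro inverse_mult_eq_1') simp

lemma W_sq: "Wx * Wx + Wy * Wy = 1"
proof -
  define A where "A = fps_const ax" define B where "B = fps_const ay"
  define K where "K = fps_const (1 / L)"
  have "Wx * Wx + Wy * Wy = (K * K * (A * A + B * B)) * N * (inverse S * inverse S)"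
    unfolding Wx_def Wy_def A_def[symmetric] B_def[symmetric] K_def[symmetric] N_def
    by (simp add: algebra_simps)
  also have "K * K * (A * A + B * B) = 1"
    unfolding K_def A_def B_def using L_pos L_sq axy_pos axy_nz by (simp add: power2_eq_square field_simps)
  also have "1 * N * (inverse S * inverse S) = (S * inverse S) * (S * inverse S)"
    unfolding S_sq[symmetric]
    by (simp add: algebra_simps)
  finally show ?thesis using S_inv by simp
qed

lemma dist_id: "(Xn i - Xn j) * (Xn i - Xn j) + (Yn i - Yn j) * (Yn i - Yn j)
   = (X i - X j) * (X i - X j) + (Y i - Y j) * (Y i - Y j)"
proof -
  have "(Xn i - Xn j) * (Xn i - Xn j) + (Yn i - Yn j) * (Yn i - Yn j)
     = ((X i - X j) * (X i - X j) + (Y i - Y j) * (Y i - Y j)) * (Wx * Wx + Wy * Wy)"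
    unfolding Xn_def Yn_def by (simp add: algebra_simps)
  then show ?thesis using W_sq by simp
qed

lemma Xn_u: "Xn u = fps_const (fps_nth (X u) 0)" and Yn_u: "Yn u = fps_const (fps_nth (Y u) 0)"
  unfolding Xn_def Yn_def by simp_all

lemma Xn_v: "Xn v = fps_const (fps_nth (X u) 0) + fps_const (ax / L) * S"
proof -
  define A where "A = fps_const ax" define B where "B = fps_const ay"
  define K where "K = fps_const (1 / L)"
  have "Xn v = fps_const (fps_nth (X u) 0) + K * A * (S * S) * inverse S"
    unfolding Xn_def Wx_def Wy_def A_def[symmetric] B_def[symmetric] K_def[symmetric] S_sq N_def
      Dx_def[symmetric] Dy_def[symmetric]
    by (simp add: algebra_simps)
  also have "K * A * (S * S) * inverse S = K * A * S * (S * inverse S)" by (simp add: algebra_simps)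
  finally show ?thesis using S_inv unfolding K_def A_def by simp
qed

lemma Yn_v: "Yn v = fps_const (fps_nth (Y u) 0) + fps_const (ay / L) * S"
proof -
  define A where "A = fps_const ax" define B where "B = fps_const ay"
  define K where "K = fps_const (1 / L)"
  have "Yn v = fps_const (fps_nth (Y u) 0) + K * B * (S * S) * inverse S"
    unfolding Yn_def Wx_def Wy_def A_def[symmetric] B_def[symmetric] K_def[symmetric] S_sq N_def
      Dx_def[symmetric] Dy_def[symmetric]
    by (simp add: algebra_simps)
  also have "K * B * (S * S) * inverse S = K * B * S * (S * inverse S)" by (simp add: algebra_simps)
  finally show ?thesis using S_inv unfolding K_def B_def by simp
qed

lemma W0: "fps_nth Wx 0 = 1" "fps_nth Wy 0 = 0"
proof -
  have "fps_nth Wx 0 = (1 / L) * (ax * ax + ay * ay) * inverse L"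
    unfolding Wx_def using S0 by (simp add: Dx_def Dy_def ax_def ay_def)
  also have "\<dots> = 1" using L_sq L_pos axy_pos axy_nz by (simp add: power2_eq_square field_simps)
  finally show "fps_nth Wx 0 = 1" .
  show "fps_nth Wy 0 = 0"
    unfolding Wy_def using S0 by (simp add: Dx_def Dy_def ax_def ay_def algebra_simps)
qed

lemma Xn0: "fps_nth (Xn i) 0 = fps_nth (X i) 0" and Yn0: "fps_nth (Yn i) 0 = fps_nth (Y i) 0"
  unfolding Xn_def Yn_def using W0 by simp_all

end

lemma fps_decomp:
  fixes F :: "real fps"
  assumes "k \<ge> 1" "\<forall>j. 0 < j \<and> j < k \<longrightarrow> fps_nth F j = 0"
  shows "F = fps_const (fps_nth F 0) + fps_X ^ k * fps_shift k F"
proof (rule fps_ext)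
  fix n
  show "fps_nth F n = fps_nth (fps_const (fps_nth F 0) + fps_X ^ k * fps_shift k F) n"
    using assms by (cases "n = 0") (auto simp: fps_X_power_mult_nth)
qed

lemma prod_coeff:
  fixes F G :: "real fps"
  assumes k: "k \<ge> 1" and F: "\<forall>j. 0 < j \<and> j < k \<longrightarrow> fps_nth F j = 0"
    and G: "\<forall>j. 0 < j \<and> j < k \<longrightarrow> fps_nth G j = 0" and n: "0 < n" "n \<le> 2 * k"
  shows "fps_nth (F * G) n = fps_nth F 0 * fps_nth G n + fps_nth G 0 * fps_nth F n
           + (if n = 2 * k then fps_nth F k * fps_nth G k else 0)"
proof -
  define A where "A = fps_shift k F"
  define B where "B = fps_shift k G"
  define c where "c = fps_nth F 0"
  define d where "d = fps_nth G 0"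
  have FF: "F = fps_const c + fps_X ^ k * A" unfolding A_def c_def by (rule fps_decomp[OF k F])
  have GG: "G = fps_const d + fps_X ^ k * B" unfolding B_def d_def by (rule fps_decomp[OF k G])
  have "F * G = fps_const (c * d) + fps_X ^ k * (fps_const c * B + fps_const d * A)
          + fps_X ^ k * (fps_X ^ k * (A * B))"
    unfolding FF GG by (simp add: algebra_simps)
  then have "fps_nth (F * G) n = (if n < k then 0 else c * fps_nth B (n - k) + d * fps_nth A (n - k))
      + (if n < k then 0 else if n - k < k then 0 else fps_nth (A * B) (n - k - k))"
    using n by (simp add: fps_X_power_mult_nth)
  also have "\<dots> = c * fps_nth G n + d * fps_nth F n
           + (if n = 2 * k then fps_nth F k * fps_nth G k else 0)"
  proof (cases "n < k")
    case True
    then show ?thesis using F G n by auto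
  next
    case False
    then show ?thesis using n unfolding A_def B_def by auto
  qed
  finally show ?thesis unfolding c_def d_def by simp
qed

lemma eval_trunc:
  fixes F :: "real fps"
  shows "eval_fps (Abs_fps (\<lambda>j. if j \<le> M then fps_nth F j else 0)) t = (\<Sum>j\<le>M. fps_nth F j * t ^ j)"
  unfolding eval_fps_def by (subst suminf_finite[of "{..M}"]) auto

lemma radius_trunc:
  fixes F :: "real fps"
  shows "fps_conv_radius (Abs_fps (\<lambda>j. if j \<le> M then fps_nth F j else 0)) > 0"
proof -
  have "summable (\<lambda>n. fps_nth (Abs_fps (\<lambda>j. if j \<le> M then fps_nth F j else 0)) n * (1::real) ^ n)"
    by (rule summable_finite[of "{..M}"]) auto
  then have "conv_radius (fps_nth (Abs_fps (\<lambda>j. if j \<le> M then fps_nth F j else 0))) \<ge> norm (1::real)"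
    by (rule conv_radius_geI)
  moreover have "(0::ereal) < ereal (norm (1::real))" by simp
  ultimately show ?thesis unfolding fps_conv_radius_def by (rule order.strict_trans2[rotated])
qed

lemma ex_at_right:
  assumes "eventually P (at_right (0::real))"
  shows "\<exists>t>0. P t"
proof -
  have "eventually (\<lambda>t. t > 0 \<and> P t) (at_right (0::real))"
    using assms eventually_at_right_less[of 0] by (auto elim: eventually_elim2)
  then show ?thesis using eventually_happens[of _ "at_right (0::real)"] trivial_limit_at_right_real
    by blast
qed

lemma polysign:
  fixes F :: "real fps"
  assumes rF: "fps_conv_radius F > 0" and d: "d > 0" and nn: "\<forall>t\<in>{0<..<d}. eval_fps F t \<ge> 0"
  shows "eventually (\<lambda>t. (\<Sum>j\<le>M. fps_nth F j * t ^ j) \<ge> 0) (at_right 0)"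
proof -
  define T where "T = Abs_fps (\<lambda>j. if j \<le> M then fps_nth F j else 0)"
  have evT: "eval_fps T t = (\<Sum>j\<le>M. fps_nth F j * t ^ j)" for t
    unfolding T_def by (rule eval_trunc)
  have rT: "fps_conv_radius T > 0" unfolding T_def by (rule radius_trunc)
  show ?thesis
  proof (cases "T = 0")
    case True
    then show ?thesis using evT[symmetric] by simp
  next
    case False
    define j0 where "j0 = subdegree T"
    have Tj0: "fps_nth T j0 \<noteq> 0" using False unfolding j0_def by simp
    then have j0M: "j0 \<le> M" unfolding T_def by (auto split: if_splits)
    have Fj0: "fps_nth F j0 = fps_nth T j0" using j0M unfolding T_def by simp
    have Flow: "fps_nth F j = 0" if "j < j0" for j
    proof -
      have "fps_nth T j = 0" using that unfolding j0_def by (rule nth_less_subdegree_zero)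
      then show ?thesis using that j0M unfolding T_def by simp
    qed
    have subF: "subdegree F = j0" using Fj0 Tj0 Flow by (intro subdegreeI) auto
    have F0: "F \<noteq> 0" using Fj0 Tj0 by auto
    have pos: "fps_nth T j0 > 0"
    proof (rule ccontr)
      assume "\<not> fps_nth T j0 > 0"
      then have neg: "fps_nth (-F) (subdegree (-F)) > 0" using Tj0 Fj0 subF by simp
      have "eventually (\<lambda>t. eval_fps (-F) t > 0) (at_right 0)"
        using fps_eventually_pos[of "-F"] rF F0 neg by simp
      moreover have "eventually (\<lambda>t. t \<in> {0<..<d}) (at_right (0::real))"
        using d by (rule eventually_at_right_real)
      moreover have "eventually (\<lambda>t::real. ereal (norm t) < fps_conv_radius F) (at_right 0)"
        using eventually_in_radius[OF rF] by (rule filter_leD[rotated]) (simp add: at_le)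
      ultimately have "eventually (\<lambda>t. False) (at_right (0::real))"
      proof eventually_elim
        case (elim t)
        then have "eval_fps (-F) t = - eval_fps F t" by (intro eval_fps_minus) simp
        then show ?case using elim nn by force
      qed
      then show False by (simp add: trivial_limit_at_right_real)
    qed
    have "subdegree T = j0" unfolding j0_def ..
    then have "eventually (\<lambda>t. eval_fps T t > 0) (at_right 0)"
      using fps_eventually_pos[of T] rT False pos by simp
    then show ?thesis by (rule eventually_mono) (simp add: evT)
  qed
qed

lemma edge_coeff:
  fixes A B C :: "real fps"
  assumes eq: "A * A + B * B = C * C" and k: "k \<ge> 1"
    and van: "\<forall>j. 0 < j \<and> j < k \<longrightarrow> fps_nth A j = 0 \<and> fps_nth B j = 0 \<and> fps_nth C j = 0"
    and n: "0 < n" "n \<le> 2 * k"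
  shows "2 * (fps_nth A 0 * fps_nth A n + fps_nth B 0 * fps_nth B n - fps_nth C 0 * fps_nth C n)
    + (if n = 2 * k then (fps_nth A k)\<^sup>2 + (fps_nth B k)\<^sup>2 - (fps_nth C k)\<^sup>2 else 0) = 0"
proof -
  have vA: "\<forall>j. 0 < j \<and> j < k \<longrightarrow> fps_nth A j = 0" using van by blast
  have vB: "\<forall>j. 0 < j \<and> j < k \<longrightarrow> fps_nth B j = 0" using van by blast
  have vC: "\<forall>j. 0 < j \<and> j < k \<longrightarrow> fps_nth C j = 0" using van by blast
  have "fps_nth (A * A) n + fps_nth (B * B) n = fps_nth (C * C) n"
    using arg_cong[OF eq, of "\<lambda>F. fps_nth F n"] by simp
  then show ?thesis
    unfolding prod_coeff[OF k vA vA n] prod_coeff[OF k vB vB n] prod_coeff[OF k vC vC n]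
    by (auto simp: power2_eq_square algebra_simps split: if_splits)
qed

lemma lead_nonneg:
  fixes F :: "real fps"
  assumes rF: "fps_conv_radius F > 0" and d: "d > 0" and nn: "\<forall>t\<in>{0<..<d}. eval_fps F t \<ge> 0"
    and low: "\<forall>j<M. fps_nth F j = 0"
  shows "fps_nth F M \<ge> 0"
proof -
  obtain t where t: "t > 0" "(\<Sum>j\<le>M. fps_nth F j * t ^ j) \<ge> 0"
    using ex_at_right[OF polysign[OF rF d nn, of M]] by blast
  have "(\<Sum>j\<le>M. fps_nth F j * t ^ j) = fps_nth F M * t ^ M"
    using low by (subst sum.remove[of _ M]) (auto intro!: sum.neutral)
  then have pr: "fps_nth F M * t ^ M \<ge> 0" using t by simp
  have tp: "t ^ M > 0" using t by simp
  show ?thesis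
  proof (rule ccontr)
    assume "\<not> 0 \<le> fps_nth F M"
    then have "fps_nth F M * t ^ M < 0" using tp by (intro mult_neg_pos) simp_all
    then show False using pr by simp
  qed
qed

lemma sor_contra:
  fixes E :: "('v::finite \<times> 'v) set" and Xn Yn R :: "'v \<Rightarrow> real fps" and p :: "'v cfg"
  assumes SOR: "second_order_rigid E Vp Vm Ve p"
    and edge: "\<And>i j. (i, j) \<in> E \<Longrightarrow> (Xn i - Xn j) * (Xn i - Xn j) + (Yn i - Yn j) * (Yn i - Yn j)
                  = (R i + R j) * (R i + R j)"
    and cx: "\<And>i. fps_nth (Xn i) 0 = Re (ctr p i)" and cy: "\<And>i. fps_nth (Yn i) 0 = Im (ctr p i)"
    and cr: "\<And>i. fps_nth (R i) 0 = rad p i"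
    and d: "d > 0"
    and rR: "\<And>i. fps_conv_radius (R i - fps_const (rad p i)) > 0"
    and sp: "\<And>i t. i \<in> Vp \<Longrightarrow> t \<in> {0<..<d} \<Longrightarrow> eval_fps (R i - fps_const (rad p i)) t \<ge> 0"
    and sm: "\<And>i t. i \<in> Vm \<Longrightarrow> t \<in> {0<..<d} \<Longrightarrow> eval_fps (- (R i - fps_const (rad p i))) t \<ge> 0"
    and se: "\<And>i. i \<in> Ve \<Longrightarrow> R i = fps_const (rad p i)"
    and uv: "ctr p u \<noteq> ctr p v"
    and pu: "\<And>n. n \<ge> 1 \<Longrightarrow> fps_nth (Xn u) n = 0 \<and> fps_nth (Yn u) n = 0"
    and pv: "\<And>n. n \<ge> 1 \<Longrightarrow> fps_nth (Xn v) n = Re (ctr p v - ctr p u) * \<sigma> n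
                \<and> fps_nth (Yn v) n = Im (ctr p v - ctr p u) * \<sigma> n"
    and nz: "\<exists>n\<ge>1. \<exists>i. fps_nth (Xn i) n \<noteq> 0 \<or> fps_nth (Yn i) n \<noteq> 0 \<or> fps_nth (R i) n \<noteq> 0"
  shows False
proof -
  define nzp where "nzp n \<longleftrightarrow> (\<exists>i. fps_nth (Xn i) n \<noteq> 0 \<or> fps_nth (Yn i) n \<noteq> 0 \<or> fps_nth (R i) n \<noteq> 0)" for n
  define k where "k = (LEAST n. 1 \<le> n \<and> nzp n)"
  have ex: "\<exists>n. 1 \<le> n \<and> nzp n" using nz unfolding nzp_def by blast
  have k1: "1 \<le> k" and nzk: "nzp k" using LeastI_ex[OF ex] unfolding k_def by auto
  have below: "fps_nth (Xn i) n = 0 \<and> fps_nth (Yn i) n = 0 \<and> fps_nth (R i) n = 0"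
    if "0 < n" "n < k" for n i
  proof -
    have "\<not> (1 \<le> n \<and> nzp n)" using not_less_Least[of n "\<lambda>n. 1 \<le> n \<and> nzp n"] that unfolding k_def by blast
    then show ?thesis using that unfolding nzp_def by auto
  qed
  define \<Phi> where "\<Phi> i = R i - fps_const (rad p i)" for i
  have \<Phi>0: "fps_nth (\<Phi> i) 0 = 0" for i unfolding \<Phi>_def using cr by simp
  have \<Phi>n: "fps_nth (\<Phi> i) n = fps_nth (R i) n" if "n > 0" for i n unfolding \<Phi>_def using that by simp
  define q :: "'v cfg" where "q i = (Complex (fps_nth (Xn i) k) (fps_nth (Yn i) k), fps_nth (R i) k)" for i
  define T where "T i j n = (Re (ctr p i) - Re (ctr p j)) * (fps_nth (Xn i) n - fps_nth (Xn j) n)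
      + (Im (ctr p i) - Im (ctr p j)) * (fps_nth (Yn i) n - fps_nth (Yn j) n)
      - (rad p i + rad p j) * (fps_nth (R i) n + fps_nth (R j) n)" for i j n
  have ceq: "2 * T i j n + (if n = 2 * k then (fps_nth (Xn i) k - fps_nth (Xn j) k)\<^sup>2
      + (fps_nth (Yn i) k - fps_nth (Yn j) k)\<^sup>2 - (fps_nth (R i) k + fps_nth (R j) k)\<^sup>2 else 0) = 0"
    if ij: "(i, j) \<in> E" and n: "0 < n" "n \<le> 2 * k" for i j n
  proof -
    have van: "\<forall>m. 0 < m \<and> m < k \<longrightarrow> fps_nth (Xn i - Xn j) m = 0 \<and> fps_nth (Yn i - Yn j) m = 0
       \<and> fps_nth (R i + R j) m = 0" using below by simp
    from edge_coeff[OF edge[OF ij] k1 van n] show ?thesis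
      unfolding T_def fps_sub_nth fps_add_nth by (simp add: cx cy cr algebra_simps)
  qed
  have Tk: "T i j k = 0" if "(i, j) \<in> E" for i j
    using ceq[OF that, of k] k1 by simp
  have Tmid: "T i j m = 0" if "(i, j) \<in> E" "k < m" "m < 2 * k" for i j m
    using ceq[OF that(1), of m] that k1 by simp
  have T2k: "2 * T i j (2 * k) = (fps_nth (R i) k + fps_nth (R j) k)\<^sup>2
      - (fps_nth (Xn i) k - fps_nth (Xn j) k)\<^sup>2 - (fps_nth (Yn i) k - fps_nth (Yn j) k)\<^sup>2"
    if "(i, j) \<in> E" for i j
    using ceq[OF that, of "2 * k"] k1 by simp
  have infl: "inf_flex E p q"
    unfolding inf_flex_def
  proof (clarify)
    fix i j assume ij: "(i, j) \<in> E"
    show "inner (ctr p i - ctr p j) (ctr q i - ctr q j) = (rad p i + rad p j) * (rad q i + rad q j)"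
      using Tk[OF ij] unfolding T_def q_def by (simp add: inner_complex_def algebra_simps)
  qed
  have lowk: "\<forall>j<k. fps_nth (\<Phi> i) j = 0" for i
    using \<Phi>0 \<Phi>n below by (metis gr0I)
  have rad\<Phi>: "fps_conv_radius (\<Phi> i) > 0" for i unfolding \<Phi>_def by (rule rR)
  have radm\<Phi>: "fps_conv_radius (- \<Phi> i) > 0" for i using rad\<Phi>[of i] by simp
  have smm: "\<forall>t\<in>{0<..<d}. eval_fps (- \<Phi> i) t \<ge> 0" if "i \<in> Vm" for i
    using sm[OF that] unfolding \<Phi>_def by blast
  have lowm: "\<forall>j<k. fps_nth (- \<Phi> i) j = 0" for i using lowk[of i] by simp
  have proper: "proper_inf Vp Vm Ve q"
    unfolding proper_inf_def
  proof (intro conjI ballI)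
    fix i assume i: "i \<in> Vp"
    have "fps_nth (\<Phi> i) k \<ge> 0"
      by (rule lead_nonneg[OF rad\<Phi> d _ lowk]) (use sp[OF i] in \<open>simp add: \<Phi>_def\<close>)
    then show "rad q i \<ge> 0" unfolding q_def using \<Phi>n[of k i] k1 by simp
  next
    fix i assume i: "i \<in> Vm"
    have "fps_nth (- \<Phi> i) k \<ge> 0"
      by (rule lead_nonneg[OF radm\<Phi> d smm[OF i] lowm])
    then show "rad q i \<le> 0" unfolding q_def using \<Phi>n[of k i] k1 by simp
  next
    fix i assume i: "i \<in> Ve"
    show "rad q i = 0" unfolding q_def using se[OF i] k1 by simp
  qed
  have nontriv: "\<not> trivial_inf p q"
  proof
    assume "trivial_inf p q"
    then obtain a :: complex and \<omega> :: real where
      h: "\<And>i. ctr q i = a + \<i> * complex_of_real \<omega> * ctr p i \<and> rad q i = 0"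
      unfolding trivial_inf_def by blast
    define \<Delta> where "\<Delta> = ctr p v - ctr p u"
    have qu: "ctr q u = 0" unfolding q_def using pu[OF k1] by (simp add: complex_eq_iff)
    have qv: "ctr q v = Complex (Re \<Delta> * \<sigma> k) (Im \<Delta> * \<sigma> k)" unfolding q_def \<Delta>_def using pv[OF k1] by simp
    have "ctr q v - ctr q u = \<i> * complex_of_real \<omega> * \<Delta>"
      using h[of u] h[of v] unfolding \<Delta>_def by (simp add: algebra_simps)
    then have "Complex (Re \<Delta> * \<sigma> k) (Im \<Delta> * \<sigma> k) = \<i> * complex_of_real \<omega> * \<Delta>" using qu qv by simp
    then have e1: "Re \<Delta> * \<sigma> k = - \<omega> * Im \<Delta>" and e2: "Im \<Delta> * \<sigma> k = \<omega> * Re \<Delta>"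
      by (simp_all add: complex_eq_iff)
    have "\<Delta> \<noteq> 0" using uv unfolding \<Delta>_def by simp
    then have \<Delta>nz: "(Re \<Delta>)\<^sup>2 + (Im \<Delta>)\<^sup>2 > 0" by (simp only: complex_neq_0)
    have "\<sigma> k * ((Re \<Delta>)\<^sup>2 + (Im \<Delta>)\<^sup>2) = Re \<Delta> * (Re \<Delta> * \<sigma> k) + Im \<Delta> * (Im \<Delta> * \<sigma> k)"
      by (simp add: power2_eq_square algebra_simps)
    also have "\<dots> = 0" unfolding e1 e2 by (simp add: algebra_simps)
    finally have s0: "\<sigma> k = 0" using \<Delta>nz by (auto simp: mult_eq_0_iff)
    have "\<omega> * ((Re \<Delta>)\<^sup>2 + (Im \<Delta>)\<^sup>2) = - Im \<Delta> * (Re \<Delta> * \<sigma> k) + Re \<Delta> * (Im \<Delta> * \<sigma> k)"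
      unfolding e1 e2 by (simp add: power2_eq_square algebra_simps)
    also have "\<dots> = 0" using s0 by simp
    finally have w0: "\<omega> = 0" using \<Delta>nz by (auto simp: mult_eq_0_iff)
    have a0: "a = 0" using h[of u] qu w0 by simp
    have "\<not> nzp k"
      unfolding nzp_def
    proof
      assume "\<exists>i. fps_nth (Xn i) k \<noteq> 0 \<or> fps_nth (Yn i) k \<noteq> 0 \<or> fps_nth (R i) k \<noteq> 0"
      then obtain i where "fps_nth (Xn i) k \<noteq> 0 \<or> fps_nth (Yn i) k \<noteq> 0 \<or> fps_nth (R i) k \<noteq> 0" by blast
      moreover have "ctr q i = 0" "rad q i = 0" using h[of i] a0 w0 by simp_all
      ultimately show False unfolding q_def by (simp add: complex_eq_iff)
    qed
    then show False using nzk by simp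
  qed
  have finV: "finite A" for A :: "'v set" by simp
  have evp: "eventually (\<lambda>t. \<forall>i\<in>Vp. (\<Sum>j\<le>2*k. fps_nth (\<Phi> i) j * t ^ j) \<ge> 0) (at_right 0)"
    by (rule eventually_ball_finite[OF finV]) (use polysign[OF rad\<Phi> d] sp in \<open>auto simp: \<Phi>_def\<close>)
  have evm: "eventually (\<lambda>t. \<forall>i\<in>Vm. (\<Sum>j\<le>2*k. fps_nth (- \<Phi> i) j * t ^ j) \<ge> 0) (at_right 0)"
  proof (rule eventually_ball_finite[OF finV], rule ballI)
    fix i assume i: "i \<in> Vm"
    show "eventually (\<lambda>t. (\<Sum>j\<le>2*k. fps_nth (- \<Phi> i) j * t ^ j) \<ge> 0) (at_right 0)"
      by (rule polysign[OF radm\<Phi> d smm[OF i]])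
  qed
  obtain \<tau> where \<tau>: "\<tau> > 0" "\<forall>i\<in>Vp. (\<Sum>j\<le>2*k. fps_nth (\<Phi> i) j * \<tau> ^ j) \<ge> 0"
     "\<forall>i\<in>Vm. (\<Sum>j\<le>2*k. fps_nth (- \<Phi> i) j * \<tau> ^ j) \<ge> 0"
    using ex_at_right[OF eventually_conj[OF evp evm]] by blast
  define J where "J = {k<..2*k}"
  define w where "w j = \<tau> ^ j / \<tau> ^ (2 * k)" for j
  define s :: "'v cfg" where "s i = (Complex (2 * (\<Sum>j\<in>J. w j * fps_nth (Xn i) j))
       (2 * (\<Sum>j\<in>J. w j * fps_nth (Yn i) j)), 2 * (\<Sum>j\<in>J. w j * fps_nth (R i) j))" for i
  have splitsum: "(\<Sum>j\<le>2*k. fps_nth (\<Phi> i) j * \<tau> ^ j) = (\<Sum>j\<in>J. fps_nth (R i) j * \<tau> ^ j)"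
    if "fps_nth (R i) k = 0" for i
  proof -
    have "{..2*k} = {..k} \<union> J" unfolding J_def by auto
    then have "(\<Sum>j\<le>2*k. fps_nth (\<Phi> i) j * \<tau> ^ j)
        = (\<Sum>j\<le>k. fps_nth (\<Phi> i) j * \<tau> ^ j) + (\<Sum>j\<in>J. fps_nth (\<Phi> i) j * \<tau> ^ j)"
      by (simp add: J_def) (rule sum.union_disjoint, auto)
    also have "(\<Sum>j\<le>k. fps_nth (\<Phi> i) j * \<tau> ^ j) = 0"
    proof (rule sum.neutral, rule ballI)
      fix j assume "j \<in> {..k}"
      then have "j < k \<or> j = k" by auto
      then show "fps_nth (\<Phi> i) j * \<tau> ^ j = 0" using lowk[of i] \<Phi>n[of k i] k1 that by auto
    qed
    also have "(\<Sum>j\<in>J. fps_nth (\<Phi> i) j * \<tau> ^ j) = (\<Sum>j\<in>J. fps_nth (R i) j * \<tau> ^ j)"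
      by (rule sum.cong) (auto simp: J_def \<Phi>n)
    finally show ?thesis by simp
  qed
  have wsum: "(\<Sum>j\<in>J. w j * fps_nth (R i) j) = (\<Sum>j\<in>J. fps_nth (R i) j * \<tau> ^ j) / \<tau> ^ (2 * k)" for i
    unfolding w_def by (simp add: sum_divide_distrib algebra_simps)
  have ext: "extendable E Vp Vm Ve p q"
    unfolding extendable_def
  proof (intro exI[of _ s] conjI ballI)
    fix i assume "i \<in> {i \<in> Vp. rad q i = 0}"
    then have i: "i \<in> Vp" "fps_nth (R i) k = 0" unfolding q_def by auto
    have "(\<Sum>j\<le>2*k. fps_nth (\<Phi> i) j * \<tau> ^ j) \<ge> 0" using \<tau>(2) i(1) by blast
    then have "(\<Sum>j\<in>J. fps_nth (R i) j * \<tau> ^ j) \<ge> 0" by (simp only: splitsum[OF i(2)])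
    then show "rad s i \<ge> 0" unfolding s_def wsum using \<tau>(1) by simp
  next
    fix i assume "i \<in> {i \<in> Vm. rad q i = 0}"
    then have i: "i \<in> Vm" "fps_nth (R i) k = 0" unfolding q_def by auto
    have "(\<Sum>j\<le>2*k. fps_nth (- \<Phi> i) j * \<tau> ^ j) = - (\<Sum>j\<le>2*k. fps_nth (\<Phi> i) j * \<tau> ^ j)"
      by (simp add: sum_negf)
    moreover have "(\<Sum>j\<le>2*k. fps_nth (- \<Phi> i) j * \<tau> ^ j) \<ge> 0" using \<tau>(3) i(1) by blast
    ultimately have "(\<Sum>j\<in>J. fps_nth (R i) j * \<tau> ^ j) \<le> 0" by (simp only: splitsum[OF i(2)])
    then show "rad s i \<le> 0" unfolding s_def wsum using \<tau>(1) by (simp add: divide_nonpos_pos)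
  next
    fix i assume i: "i \<in> Ve"
    have "fps_nth (R i) j = 0" if "j \<in> J" for j using se[OF i] that unfolding J_def by auto
    then show "rad s i = 0" unfolding s_def by simp
  next
    fix x assume x: "x \<in> E"
    obtain i j where xij: "x = (i, j)" by (cases x)
    have ij: "(i, j) \<in> E" using x xij by simp
    have "inner (ctr p i - ctr p j) (ctr s i - ctr s j) - (rad p i + rad p j) * (rad s i + rad s j) =
          (rad q i + rad q j)\<^sup>2 - inner (ctr q i - ctr q j) (ctr q i - ctr q j)"
    proof -
      define e0 where "e0 = Re (ctr p i) - Re (ctr p j)"
      define f0 where "f0 = Im (ctr p i) - Im (ctr p j)"
      define g0 where "g0 = rad p i + rad p j"
      define SX where "SX = (\<Sum>m\<in>J. w m * (fps_nth (Xn i) m - fps_nth (Xn j) m))"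
      define SY where "SY = (\<Sum>m\<in>J. w m * (fps_nth (Yn i) m - fps_nth (Yn j) m))"
      define SR where "SR = (\<Sum>m\<in>J. w m * (fps_nth (R i) m + fps_nth (R j) m))"
      have A1: "(\<Sum>m\<in>J. w m * fps_nth (Xn i) m) - (\<Sum>m\<in>J. w m * fps_nth (Xn j) m) = SX"
        unfolding SX_def by (simp add: sum_subtractf right_diff_distrib)
      have A2: "(\<Sum>m\<in>J. w m * fps_nth (Yn i) m) - (\<Sum>m\<in>J. w m * fps_nth (Yn j) m) = SY"
        unfolding SY_def by (simp add: sum_subtractf right_diff_distrib)
      have A3: "(\<Sum>m\<in>J. w m * fps_nth (R i) m) + (\<Sum>m\<in>J. w m * fps_nth (R j) m) = SR"
        unfolding SR_def by (simp add: sum.distrib distrib_left)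
      have lhs: "inner (ctr p i - ctr p j) (ctr s i - ctr s j) - (rad p i + rad p j) * (rad s i + rad s j)
          = 2 * (e0 * SX + f0 * SY - g0 * SR)"
      proof -
        have "inner (ctr p i - ctr p j) (ctr s i - ctr s j) - (rad p i + rad p j) * (rad s i + rad s j)
          = e0 * (2 * (\<Sum>m\<in>J. w m * fps_nth (Xn i) m) - 2 * (\<Sum>m\<in>J. w m * fps_nth (Xn j) m))
          + f0 * (2 * (\<Sum>m\<in>J. w m * fps_nth (Yn i) m) - 2 * (\<Sum>m\<in>J. w m * fps_nth (Yn j) m))
          - g0 * (2 * (\<Sum>m\<in>J. w m * fps_nth (R i) m) + 2 * (\<Sum>m\<in>J. w m * fps_nth (R j) m))"
          unfolding s_def e0_def f0_def g0_def by (simp add: inner_complex_def)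
        also have "\<dots> = 2 * (e0 * SX + f0 * SY - g0 * SR)"
          unfolding A1[symmetric] A2[symmetric] A3[symmetric] by (simp add: algebra_simps)
        finally show ?thesis .
      qed
      have rhs: "(\<Sum>m\<in>J. w m * T i j m) = e0 * SX + f0 * SY - g0 * SR"
      proof -
        have "(\<Sum>m\<in>J. w m * T i j m) = (\<Sum>m\<in>J. e0 * (w m * (fps_nth (Xn i) m - fps_nth (Xn j) m))
            + f0 * (w m * (fps_nth (Yn i) m - fps_nth (Yn j) m)) - g0 * (w m * (fps_nth (R i) m + fps_nth (R j) m)))"
          unfolding T_def e0_def f0_def g0_def by (rule sum.cong) (simp_all add: algebra_simps)
        also have "\<dots> = e0 * SX + f0 * SY - g0 * SR"
          unfolding SX_def SY_def SR_def by (simp add: sum_subtractf sum.distrib sum_distrib_left)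
        finally show ?thesis .
      qed
      have "inner (ctr p i - ctr p j) (ctr s i - ctr s j) - (rad p i + rad p j) * (rad s i + rad s j)
          = 2 * (\<Sum>m\<in>J. w m * T i j m)"
        unfolding lhs rhs ..
      also have "(\<Sum>m\<in>J. w m * T i j m) = w (2 * k) * T i j (2 * k)"
      proof -
        have "J = insert (2 * k) {k<..<2*k}" unfolding J_def using k1 by auto
        then have "(\<Sum>m\<in>J. w m * T i j m) = w (2 * k) * T i j (2 * k) + (\<Sum>m\<in>{k<..<2*k}. w m * T i j m)"
          by simp
        also have "(\<Sum>m\<in>{k<..<2*k}. w m * T i j m) = 0"
          by (rule sum.neutral) (use Tmid[OF ij] in auto)
        finally show ?thesis by simp
      qed
      also have "w (2 * k) = 1" unfolding w_def using \<tau>(1) by simp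
      finally show "inner (ctr p i - ctr p j) (ctr s i - ctr s j) - (rad p i + rad p j) * (rad s i + rad s j) =
          (rad q i + rad q j)\<^sup>2 - inner (ctr q i - ctr q j) (ctr q i - ctr q j)"
        using T2k[OF ij] unfolding q_def by (simp add: inner_complex_def power2_eq_square)
    qed
    then show "case x of (i, j) \<Rightarrow> inner (ctr p i - ctr p j) (ctr s i - ctr s j) - (rad p i + rad p j) * (rad s i + rad s j) =
          (rad q i + rad q j)\<^sup>2 - inner (ctr q i - ctr q j) (ctr q i - ctr q j)"
      unfolding xij by simp
  qed
  show False using SOR infl proper nontriv ext unfolding second_order_rigid_def by blast
qed

definition okr :: "real \<Rightarrow> real fps \<Rightarrow> bool" where
  "okr d F \<longleftrightarrow> ereal d < fps_conv_radius F"

lemma okr_add [simp]: "okr d F \<Longrightarrow> okr d G \<Longrightarrow> okr d (F + G)"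
  unfolding okr_def by (rule radius_min_less[OF _ _ fps_conv_radius_add])
lemma okr_diff [simp]: "okr d F \<Longrightarrow> okr d G \<Longrightarrow> okr d (F - G)"
  unfolding okr_def by (rule radius_min_less[OF _ _ fps_conv_radius_diff])
lemma okr_mult [simp]: "okr d F \<Longrightarrow> okr d G \<Longrightarrow> okr d (F * G)"
  unfolding okr_def by (rule radius_min_less[OF _ _ fps_conv_radius_mult])
lemma okr_const [simp]: "okr d (fps_const c)"
  unfolding okr_def by simp
lemma okr_uminus [simp]: "okr d F \<Longrightarrow> okr d (- F)"
  unfolding okr_def by simp

lemma okr_norm: "okr d F \<Longrightarrow> \<bar>h\<bar> < d \<Longrightarrow> ereal (norm h) < fps_conv_radius F"
  unfolding okr_def
proof -
  assume a: "ereal d < fps_conv_radius F" "\<bar>h\<bar> < d"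
  have "ereal (norm h) < ereal d" using a(2) by simp
  then show "ereal (norm h) < fps_conv_radius F" using a(1) by (rule less_trans)
qed

lemma okr_pos: "okr d F \<Longrightarrow> d > 0 \<Longrightarrow> fps_conv_radius F > 0"
  unfolding okr_def
proof -
  assume a: "ereal d < fps_conv_radius F" "d > 0"
  have "0 < ereal d" using a(2) by simp
  then show "0 < fps_conv_radius F" using a(1) by (rule less_trans)
qed

lemma ev_add: "okr d F \<Longrightarrow> okr d G \<Longrightarrow> \<bar>h\<bar> < d \<Longrightarrow> eval_fps (F + G) h = eval_fps F h + eval_fps G h"
  by (intro eval_fps_add okr_norm)
lemma ev_diff: "okr d F \<Longrightarrow> okr d G \<Longrightarrow> \<bar>h\<bar> < d \<Longrightarrow> eval_fps (F - G) h = eval_fps F h - eval_fps G h"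
  by (intro eval_fps_diff okr_norm)
lemma ev_mult: "okr d F \<Longrightarrow> okr d G \<Longrightarrow> \<bar>h\<bar> < d \<Longrightarrow> eval_fps (F * G) h = eval_fps F h * eval_fps G h"
  by (intro eval_fps_mult okr_norm)
lemma ev_uminus: "okr d F \<Longrightarrow> \<bar>h\<bar> < d \<Longrightarrow> eval_fps (- F) h = - eval_fps F h"
  by (intro eval_fps_minus okr_norm)

lemma frequently_at0_of_right:
  assumes "m > 0" "\<And>h::real. h \<in> {0<..<m} \<Longrightarrow> P h"
  shows "frequently P (at 0)"
  unfolding frequently_def
proof
  assume ev: "eventually (\<lambda>h. \<not> P h) (at 0)"
  have "eventually (\<lambda>h. \<not> P h) (at_right 0)" using ev by (rule filter_leD[rotated]) (simp add: at_le)
  moreover have "eventually (\<lambda>h. h \<in> {0<..<m}) (at_right (0::real))"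
    using assms(1) by (intro eventually_at_right_real) simp
  ultimately have "eventually (\<lambda>h. False) (at_right (0::real))"
    by eventually_elim (use assms(2) in auto)
  then show False by (simp add: trivial_limit_at_right_real)
qed

lemma fps_zero_right:
  assumes "okr d F" "d > 0" "\<And>h. 0 < h \<Longrightarrow> h < d \<Longrightarrow> eval_fps F h = 0"
  shows "F = 0"
proof (rule fps_zero_if_eval_zero)
  show "fps_conv_radius F > 0" using okr_pos assms by blast
  show "frequently (\<lambda>t. eval_fps F t = 0) (at 0)"
    using assms(2,3) by (intro frequently_at0_of_right[of d]) auto
qed

lemma local_series0:
  fixes P :: "real \<Rightarrow> 'v::finite cfg"
  assumes "analytic_path P"
  obtains \<delta> X Y R where "\<delta> > 0" "\<delta> \<le> 1" "\<And>i. okr \<delta> (X i)" "\<And>i. okr \<delta> (Y i)" "\<And>i. okr \<delta> (R i)"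
   "\<And>i h. 0 \<le> h \<Longrightarrow> h < \<delta> \<Longrightarrow> eval_fps (X i) h = Re (ctr (P h) i) \<and> eval_fps (Y i) h = Im (ctr (P h) i)
       \<and> eval_fps (R i) h = rad (P h) i"
proof -
  define G where "G i d A B C \<longleftrightarrow> okr d A \<and> okr d B \<and> okr d C \<and>
     (\<forall>h. 0 \<le> h \<and> h < d \<and> h \<le> 1 \<longrightarrow> eval_fps A h = Re (ctr (P h) i) \<and> eval_fps B h = Im (ctr (P h) i)
       \<and> eval_fps C h = rad (P h) i)" for i d A B C
  have mono: "G i d' A B C" if "G i d A B C" "d' \<le> d" for i d d' A B C
  proof -
    have "okr d' F" if "okr d F" for F
    proof -
      have "ereal d' \<le> ereal d" using \<open>d' \<le> d\<close> by simp
      then show ?thesis using that unfolding okr_def by (rule order_le_less_trans)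
    qed
    then show ?thesis using that unfolding G_def by auto
  qed
  have one: "\<exists>d>0. \<exists>F. okr d F \<and> (\<forall>h. 0 \<le> h \<and> h < d \<and> h \<le> 1 \<longrightarrow> eval_fps F h = f h)"
    if "real_analytic_on f {0..1}" for f
  proof -
    have "(0::real) \<in> {0..1}" by simp
    from real_analytic_local_fps[OF that this] obtain d F where
      "d > 0" "ereal d < fps_conv_radius F" "\<And>h. \<bar>h\<bar> < d \<Longrightarrow> 0 + h \<in> {0..1} \<Longrightarrow> eval_fps F h = f (0 + h)"
      by blast
    then show ?thesis unfolding okr_def by (intro exI[of _ d] conjI exI[of _ F]) auto
  qed
  have "\<forall>i. \<exists>z. fst z > 0 \<and> G i (fst z) (fst (snd z)) (fst (snd (snd z))) (snd (snd (snd z)))"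
  proof
    fix i
    from assms have a: "real_analytic_on (\<lambda>t. Re (ctr (P t) i)) {0..1}"
      "real_analytic_on (\<lambda>t. Im (ctr (P t) i)) {0..1}" "real_analytic_on (\<lambda>t. rad (P t) i) {0..1}"
      unfolding analytic_path_def by auto
    obtain d1 A where A: "d1 > 0" "okr d1 A"
      "\<forall>h. 0 \<le> h \<and> h < d1 \<and> h \<le> 1 \<longrightarrow> eval_fps A h = Re (ctr (P h) i)" using one[OF a(1)] by blast
    obtain d2 B where B: "d2 > 0" "okr d2 B"
      "\<forall>h. 0 \<le> h \<and> h < d2 \<and> h \<le> 1 \<longrightarrow> eval_fps B h = Im (ctr (P h) i)" using one[OF a(2)] by blast
    obtain d3 C where C: "d3 > 0" "okr d3 C"
      "\<forall>h. 0 \<le> h \<and> h < d3 \<and> h \<le> 1 \<longrightarrow> eval_fps C h = rad (P h) i" using one[OF a(3)] by blast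
    define d where "d = min d1 (min d2 d3)"
    have "okr d F" if "okr d' F" "d \<le> d'" for F d'
    proof -
      have "ereal d \<le> ereal d'" using \<open>d \<le> d'\<close> by simp
      then show ?thesis using that(1) unfolding okr_def by (rule order_le_less_trans)
    qed
    then have "okr d A" "okr d B" "okr d C" using A B C unfolding d_def by auto
    moreover have "d > 0" using A B C unfolding d_def by simp
    ultimately have "d > 0 \<and> G i d A B C" unfolding G_def using A(3) B(3) C(3) unfolding d_def by auto
    then show "\<exists>z. fst z > 0 \<and> G i (fst z) (fst (snd z)) (fst (snd (snd z))) (snd (snd (snd z)))"
      by (intro exI[of _ "(d, A, B, C)"]) simp
  qed
  from choice[OF this] obtain f where f: "\<And>i. fst (f i) > 0 \<and> G i (fst (f i)) (fst (snd (f i))) (fst (snd (snd (f i)))) (snd (snd (snd (f i))))"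
    by blast
  define \<delta> where "\<delta> = min 1 (Min (range (\<lambda>i. fst (f i))))"
  have \<delta>pos: "\<delta> > 0" unfolding \<delta>_def using f by (simp add: Min_gr_iff)
  have \<delta>le: "\<delta> \<le> fst (f i)" for i unfolding \<delta>_def by (simp add: min.coboundedI2)
  have Gi: "G i \<delta> (fst (snd (f i))) (fst (snd (snd (f i)))) (snd (snd (snd (f i))))" for i
    using mono[OF conjunct2[OF f] \<delta>le] .
  show ?thesis
  proof (rule that[of \<delta> "\<lambda>i. fst (snd (f i))" "\<lambda>i. fst (snd (snd (f i)))" "\<lambda>i. snd (snd (snd (f i)))"])
    show "\<delta> > 0" "\<delta> \<le> 1" using \<delta>pos unfolding \<delta>_def by auto
    fix i show "okr \<delta> (fst (snd (f i)))" "okr \<delta> (fst (snd (snd (f i))))" "okr \<delta> (snd (snd (snd (f i))))"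
      using Gi[of i] unfolding G_def by auto
  next
    fix i h assume "0 \<le> h" "h < \<delta>"
    moreover have "\<delta> \<le> 1" unfolding \<delta>_def by simp
    ultimately show "eval_fps (fst (snd (f i))) h = Re (ctr (P h) i) \<and> eval_fps (fst (snd (snd (f i)))) h = Im (ctr (P h) i)
       \<and> eval_fps (snd (snd (snd (f i)))) h = rad (P h) i" using Gi[of i] unfolding G_def by auto
  qed
qed

lemma degenerate:
  fixes E :: "('v::finite \<times> 'v) set" and p :: "'v cfg"
  assumes pack: "packing E rot p" and part: "vertex_partition Vp Vm Ve V0"
    and SOR: "second_order_rigid E Vp Vm Ve p"
    and same: "\<forall>i j. ctr p i = ctr p j"
  shows "(\<forall>i j :: 'v. i = j) \<and> (\<forall>i. i \<in> Ve)"
proof -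
  have E0: "E = {}"
  proof (rule ccontr)
    assume "E \<noteq> {}"
    then obtain i j where ij: "(i, j) \<in> E" by auto
    from pack ij have "(rad p i + rad p j)\<^sup>2 = (cmod (ctr p i - ctr p j))\<^sup>2" unfolding packing_def by auto
    moreover have "ctr p i = ctr p j" using same by blast
    moreover have "rad p i > 0" "rad p j > 0" using pack unfolding packing_def by auto
    ultimately show False by simp
  qed
  have all_eq: "\<forall>i j :: 'v. i = j"
  proof (rule ccontr)
    assume "\<not> (\<forall>i j :: 'v. i = j)"
    then obtain i j :: 'v where ij: "i \<noteq> j" by blast
    define q :: "'v cfg" where "q w = (if w = i then 1 else 0, 0)" for w
    have "inf_flex E p q" unfolding inf_flex_def E0 by simp
    moreover have "proper_inf Vp Vm Ve q" unfolding proper_inf_def q_def by simp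
    moreover have "\<not> trivial_inf p q"
    proof
      assume "trivial_inf p q"
      then obtain a :: complex and \<omega> :: real where
        h: "\<And>w. ctr q w = a + \<i> * complex_of_real \<omega> * ctr p w \<and> rad q w = 0"
        unfolding trivial_inf_def by blast
      have "ctr q i = ctr q j" using h[of i] h[of j] same by metis
      then show False unfolding q_def using ij by simp
    qed
    moreover have "extendable E Vp Vm Ve p q"
      unfolding extendable_def E0 by (intro exI[of _ "\<lambda>w. (0, 0)"]) simp
    ultimately show False using SOR unfolding second_order_rigid_def by blast
  qed
  have "\<forall>i. i \<in> Ve"
  proof (rule ccontr)
    assume "\<not> (\<forall>i. i \<in> Ve)"
    then obtain w where w: "w \<notin> Ve" by blast
    have nVe: "i \<notin> Ve" for i using w all_eq by metis
    define q :: "'v cfg" where "q i = (0, if i \<in> Vm then -1 else 1)" for i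
    have "inf_flex E p q" unfolding inf_flex_def E0 by simp
    moreover have "proper_inf Vp Vm Ve q"
      unfolding proper_inf_def q_def using part nVe unfolding vertex_partition_def by auto
    moreover have "\<not> trivial_inf p q"
    proof
      assume "trivial_inf p q"
      then show False unfolding trivial_inf_def q_def by (auto split: if_splits)
    qed
    moreover have "extendable E Vp Vm Ve p q"
      unfolding extendable_def E0 by (intro exI[of _ "\<lambda>w. (0, 0)"]) simp
    ultimately show False using SOR unfolding second_order_rigid_def by blast
  qed
  then show ?thesis using all_eq by blast
qed

lemma nondeg_local:
  fixes E :: "('v::finite \<times> 'v) set" and p :: "'v cfg" and P :: "real \<Rightarrow> 'v cfg"
  assumes SOR: "second_order_rigid E Vp Vm Ve p"
    and PF: "proper_flex E rot Vp Vm Ve p P" and uv: "ctr p u \<noteq> ctr p v"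
  shows "\<exists>\<epsilon>>0. \<forall>t. 0 \<le> t \<and> t < \<epsilon> \<longrightarrow>
     (\<forall>i j. (Re (ctr (P t) i) - Re (ctr (P t) j)) * (Re (ctr (P t) i) - Re (ctr (P t) j))
          + (Im (ctr (P t) i) - Im (ctr (P t) j)) * (Im (ctr (P t) i) - Im (ctr (P t) j))
        = (Re (ctr p i) - Re (ctr p j)) * (Re (ctr p i) - Re (ctr p j))
          + (Im (ctr p i) - Im (ctr p j)) * (Im (ctr p i) - Im (ctr p j))) \<and>
     (\<forall>i. rad (P t) i = rad p i)"
proof -
  have ana: "analytic_path P" and P0: "P 0 = p"
    and PT: "\<And>t. t \<in> {0..1} \<Longrightarrow> packing E rot (P t) \<and>
        (\<forall>i\<in>Vp. rad (P t) i \<ge> rad p i) \<and> (\<forall>i\<in>Vm. rad (P t) i \<le> rad p i) \<and> (\<forall>i\<in>Ve. rad (P t) i = rad p i)"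
    using PF unfolding proper_flex_def by auto
  obtain \<delta> X Y R where d: "\<delta> > 0" "\<delta> \<le> 1" and okX [simp]: "\<And>i. okr \<delta> (X i)" and okY [simp]: "\<And>i. okr \<delta> (Y i)"
    and okR [simp]: "\<And>i. okr \<delta> (R i)"
    and ev: "\<And>i h. 0 \<le> h \<Longrightarrow> h < \<delta> \<Longrightarrow> eval_fps (X i) h = Re (ctr (P h) i) \<and> eval_fps (Y i) h = Im (ctr (P h) i)
       \<and> eval_fps (R i) h = rad (P h) i"
    using local_series0[OF ana] by blast
  have hin: "h \<in> {0..1}" if "0 \<le> h" "h < \<delta>" for h using that d by auto
  have cx: "fps_nth (X i) 0 = Re (ctr p i)" and cy: "fps_nth (Y i) 0 = Im (ctr p i)"
    and cr: "fps_nth (R i) 0 = rad p i" for i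
    using ev[of 0 i] d P0 by (simp_all add: eval_fps_at_0)
  have edge: "(X i - X j) * (X i - X j) + (Y i - Y j) * (Y i - Y j) = (R i + R j) * (R i + R j)"
    if ij: "(i, j) \<in> E" for i j
  proof -
    define H where "H = (X i - X j) * (X i - X j) + (Y i - Y j) * (Y i - Y j) - (R i + R j) * (R i + R j)"
    have "H = 0"
    proof (rule fps_zero_right[of \<delta>])
      show "okr \<delta> H" unfolding H_def by simp
      show "\<delta> > 0" by (fact d(1))
      fix h :: real assume h: "0 < h" "h < \<delta>"
      have ah: "\<bar>h\<bar> < \<delta>" using h by simp
      have "packing E rot (P h)" using PT[OF hin[of h]] h by simp
      then have "(rad (P h) i + rad (P h) j)\<^sup>2 = (cmod (ctr (P h) i - ctr (P h) j))\<^sup>2"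
        using ij unfolding packing_def by auto
      then have pk: "(rad (P h) i + rad (P h) j) * (rad (P h) i + rad (P h) j)
          = (Re (ctr (P h) i) - Re (ctr (P h) j)) * (Re (ctr (P h) i) - Re (ctr (P h) j))
          + (Im (ctr (P h) i) - Im (ctr (P h) j)) * (Im (ctr (P h) i) - Im (ctr (P h) j))"
        unfolding cmod_power2 by (simp add: power2_eq_square)
      show "eval_fps H h = 0"
        unfolding H_def using ah ev[of h i] ev[of h j] h pk
        by (simp add: ev_add[where d=\<delta>] ev_diff[where d=\<delta>] ev_mult[where d=\<delta>])
    qed
    then show ?thesis unfolding H_def by simp
  qed
  have uv': "(fps_nth (X v) 0 - fps_nth (X u) 0)\<^sup>2 + (fps_nth (Y v) 0 - fps_nth (Y u) 0)\<^sup>2 > 0"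
  proof -
    have "ctr p v - ctr p u \<noteq> 0" using uv by simp
    then show ?thesis unfolding cx cy complex_neq_0 by simp
  qed
  interpret N: normal X Y u v using uv' by unfold_locales
  have edgeN: "(N.Xn i - N.Xn j) * (N.Xn i - N.Xn j) + (N.Yn i - N.Yn j) * (N.Yn i - N.Yn j)
      = (R i + R j) * (R i + R j)" if "(i, j) \<in> E" for i j
    using edge[OF that] N.dist_id by simp
  have okPhi: "okr \<delta> (R i - fps_const (rad p i))" for i by simp
  have rR: "fps_conv_radius (R i - fps_const (rad p i)) > 0" for i using okr_pos[OF okPhi d(1)] .
  have evPhi: "eval_fps (R i - fps_const (rad p i)) t = rad (P t) i - rad p i" if "0 \<le> t" "t < \<delta>" for i t
  proof -
    have "\<bar>t\<bar> < \<delta>" using that by simp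
    then show ?thesis using ev[OF that, of i] by (simp add: ev_diff[where d=\<delta>])
  qed
  have sp: "eval_fps (R i - fps_const (rad p i)) t \<ge> 0" if "i \<in> Vp" "t \<in> {0<..<\<delta>}" for i t
    using evPhi[of t i] PT[OF hin[of t]] that by auto
  have sm: "eval_fps (- (R i - fps_const (rad p i))) t \<ge> 0" if "i \<in> Vm" "t \<in> {0<..<\<delta>}" for i t
  proof -
    have "\<bar>t\<bar> < \<delta>" using that by simp
    then have "eval_fps (- (R i - fps_const (rad p i))) t = - eval_fps (R i - fps_const (rad p i)) t"
      by (rule ev_uminus[OF okPhi])
    then show ?thesis using evPhi[of t i] PT[OF hin[of t]] that by auto
  qed
  have se: "R i = fps_const (rad p i)" if "i \<in> Ve" for i
  proof -
    have "R i - fps_const (rad p i) = 0"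
    proof (rule fps_zero_right[OF okPhi d(1)])
      fix h :: real assume "0 < h" "h < \<delta>"
      then show "eval_fps (R i - fps_const (rad p i)) h = 0" using evPhi[of h i] PT[OF hin[of h]] that by auto
    qed
    then show ?thesis by simp
  qed
  have pu: "fps_nth (N.Xn u) n = 0 \<and> fps_nth (N.Yn u) n = 0" if "n \<ge> 1" for n
    using that by (simp add: N.Xn_u N.Yn_u)
  define \<sigma> where "\<sigma> n = fps_nth N.S n / N.L" for n
  have pv: "fps_nth (N.Xn v) n = Re (ctr p v - ctr p u) * \<sigma> n
            \<and> fps_nth (N.Yn v) n = Im (ctr p v - ctr p u) * \<sigma> n" if "n \<ge> 1" for n
    using that unfolding N.Xn_v N.Yn_v \<sigma>_def N.ax_def N.ay_def cx cy by simp
  have cxN: "fps_nth (N.Xn i) 0 = Re (ctr p i)" and cyN: "fps_nth (N.Yn i) 0 = Im (ctr p i)" for i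
    using N.Xn0 N.Yn0 cx cy by simp_all
  show ?thesis
  proof (cases "\<exists>n\<ge>1. \<exists>i. fps_nth (N.Xn i) n \<noteq> 0 \<or> fps_nth (N.Yn i) n \<noteq> 0 \<or> fps_nth (R i) n \<noteq> 0")
    case True
    have False
      by (rule sor_contra[OF SOR edgeN cxN cyN cr d(1) rR sp sm se uv pu pv True])
    then show ?thesis ..
  next
    case False
    have cX: "N.Xn i = fps_const (Re (ctr p i))" for i
    proof (rule fps_ext)
      fix n show "fps_nth (N.Xn i) n = fps_nth (fps_const (Re (ctr p i))) n"
        using False cxN[of i] by (cases "n = 0") auto
    qed
    have cY: "N.Yn i = fps_const (Im (ctr p i))" for i
    proof (rule fps_ext)
      fix n show "fps_nth (N.Yn i) n = fps_nth (fps_const (Im (ctr p i))) n"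
        using False cyN[of i] by (cases "n = 0") auto
    qed
    have cR: "R i = fps_const (rad p i)" for i
    proof (rule fps_ext)
      fix n show "fps_nth (R i) n = fps_nth (fps_const (rad p i)) n"
        using False cr[of i] by (cases "n = 0") auto
    qed
    have D: "(X i - X j) * (X i - X j) + (Y i - Y j) * (Y i - Y j)
        = fps_const ((Re (ctr p i) - Re (ctr p j)) * (Re (ctr p i) - Re (ctr p j))
          + (Im (ctr p i) - Im (ctr p j)) * (Im (ctr p i) - Im (ctr p j)))" for i j
      using N.dist_id[of i j] unfolding cX cY by simp
    show ?thesis
    proof (intro exI[of _ \<delta>] conjI allI impI d(1))
      fix t :: real and i j assume t: "0 \<le> t \<and> t < \<delta>"
      then have at: "\<bar>t\<bar> < \<delta>" by simp
      have "eval_fps ((X i - X j) * (X i - X j) + (Y i - Y j) * (Y i - Y j)) t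
         = (Re (ctr (P t) i) - Re (ctr (P t) j)) * (Re (ctr (P t) i) - Re (ctr (P t) j))
          + (Im (ctr (P t) i) - Im (ctr (P t) j)) * (Im (ctr (P t) i) - Im (ctr (P t) j))"
        using at ev[of t i] ev[of t j] t by (simp add: ev_add[where d=\<delta>] ev_diff[where d=\<delta>] ev_mult[where d=\<delta>])
      then show "(Re (ctr (P t) i) - Re (ctr (P t) j)) * (Re (ctr (P t) i) - Re (ctr (P t) j))
          + (Im (ctr (P t) i) - Im (ctr (P t) j)) * (Im (ctr (P t) i) - Im (ctr (P t) j))
        = (Re (ctr p i) - Re (ctr p j)) * (Re (ctr p i) - Re (ctr p j))
          + (Im (ctr p i) - Im (ctr p j)) * (Im (ctr p i) - Im (ctr p j))"
        unfolding D by simp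
    next
      fix t :: real and i assume t: "0 \<le> t \<and> t < \<delta>"
      then show "rad (P t) i = rad p i" using ev[of t i] cR[of i] by simp
    qed
  qed
qed

theorem mainTheorem8:
  fixes E :: "('v::finite \<times> 'v) set" and rot :: "'v \<Rightarrow> 'v list"
    and Vp Vm Ve V0 :: "'v set" and p :: "'v cfg"
  assumes "planar_embedded_graph E rot"
    and "packing E rot p"
    and "vertex_partition Vp Vm Ve V0"
    and "second_order_rigid E Vp Vm Ve p"
  shows "rigid E rot Vp Vm Ve p"
proof -
  have cm: "congruent_motion p P" if PF: "proper_flex E rot Vp Vm Ve p P" for P
  proof -
    have ana: "analytic_path P"
      and PT: "\<And>t i. t \<in> {0..1} \<Longrightarrow> i \<in> Ve \<Longrightarrow> rad (P t) i = rad p i"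
      using PF unfolding proper_flex_def by auto
    have key: "\<forall>t\<in>{0..1}. (\<forall>i j. cmod (ctr (P t) i - ctr (P t) j) = cmod (ctr p i - ctr p j))
                  \<and> (\<forall>i. rad (P t) i = rad p i)"
    proof (cases "\<forall>i j. ctr p i = ctr p j")
      case True
      from degenerate[OF assms(2) assms(3) assms(4) True]
      have eq: "\<And>i j :: 'v. i = j" and ve: "\<And>i. i \<in> Ve" by auto
      show ?thesis
      proof (intro ballI conjI allI)
        fix t :: real and i j :: 'v assume "t \<in> {0..1}"
        show "cmod (ctr (P t) i - ctr (P t) j) = cmod (ctr p i - ctr p j)" using eq[of i j] by simp
      next
        fix t :: real and i :: 'v assume "t \<in> {0..1}"
        then show "rad (P t) i = rad p i" using PT ve by blast
      qed
    next
      case False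
      then obtain u v where uv: "ctr p u \<noteq> ctr p v" by blast
      from nondeg_local[OF assms(4) PF uv] obtain \<epsilon> where \<epsilon>: "\<epsilon> > 0"
        and loc: "\<And>t. 0 \<le> t \<Longrightarrow> t < \<epsilon> \<Longrightarrow>
         (\<forall>i j. (Re (ctr (P t) i) - Re (ctr (P t) j)) * (Re (ctr (P t) i) - Re (ctr (P t) j))
            + (Im (ctr (P t) i) - Im (ctr (P t) j)) * (Im (ctr (P t) i) - Im (ctr (P t) j))
          = (Re (ctr p i) - Re (ctr p j)) * (Re (ctr p i) - Re (ctr p j))
            + (Im (ctr p i) - Im (ctr p j)) * (Im (ctr p i) - Im (ctr p j))) \<and>
         (\<forall>i. rad (P t) i = rad p i)"
        by blast
      have lX: "loc_fps (\<lambda>t. Re (ctr (P t) i))" and lY: "loc_fps (\<lambda>t. Im (ctr (P t) i))"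
        and lR: "loc_fps (\<lambda>t. rad (P t) i)" for i
        using ana unfolding analytic_path_def by (auto intro: loc_fps_analytic)
      show ?thesis
      proof (intro ballI conjI allI)
        fix t :: real and i j :: 'v assume t: "t \<in> {0..1}"
        define c where "c = (Re (ctr p i) - Re (ctr p j)) * (Re (ctr p i) - Re (ctr p j))
            + (Im (ctr p i) - Im (ctr p j)) * (Im (ctr p i) - Im (ctr p j))"
        define g where "g t = (Re (ctr (P t) i) - Re (ctr (P t) j)) * (Re (ctr (P t) i) - Re (ctr (P t) j))
            + (Im (ctr (P t) i) - Im (ctr (P t) j)) * (Im (ctr (P t) i) - Im (ctr (P t) j)) - c" for t
        have a1: "loc_fps (\<lambda>t. Re (ctr (P t) i) - Re (ctr (P t) j))" by (rule loc_fps_diff[OF lX lX])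
        have a2: "loc_fps (\<lambda>t. Im (ctr (P t) i) - Im (ctr (P t) j))" by (rule loc_fps_diff[OF lY lY])
        have "loc_fps g" unfolding g_def
          by (rule loc_fps_diff[OF loc_fps_add[OF loc_fps_mult[OF a1 a1] loc_fps_mult[OF a2 a2]] loc_fps_const])
        moreover have "g s = 0" if "s \<in> {0..<\<epsilon>}" for s using loc[of s] that unfolding g_def c_def by auto
        ultimately have "g t = 0" using loc_fps_identity[OF _ \<epsilon>] t by blast
        then have "(cmod (ctr (P t) i - ctr (P t) j))\<^sup>2 = (cmod (ctr p i - ctr p j))\<^sup>2"
          unfolding g_def c_def cmod_power2 by (simp add: power2_eq_square)
        then show "cmod (ctr (P t) i - ctr (P t) j) = cmod (ctr p i - ctr p j)"
          by (simp add: power2_eq_iff_nonneg)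
      next
        fix t :: real and i :: 'v assume t: "t \<in> {0..1}"
        define g where "g t = rad (P t) i - rad p i" for t
        have "loc_fps g" unfolding g_def by (rule loc_fps_diff[OF lR loc_fps_const])
        moreover have "g s = 0" if "s \<in> {0..<\<epsilon>}" for s using loc[of s] that unfolding g_def by auto
        ultimately have "g t = 0" using loc_fps_identity[OF _ \<epsilon>] t by blast
        then show "rad (P t) i = rad p i" unfolding g_def by simp
      qed
    qed
    show ?thesis
      unfolding congruent_motion_def
    proof
      fix t :: real assume t: "t \<in> {0..1}"
      have "\<And>i j. cmod (ctr (P t) i - ctr (P t) j) = cmod (ctr p i - ctr p j)" using key t by blast
      from isometry_extend[of "\<lambda>i. ctr (P t) i" "\<lambda>i. ctr p i", OF this]
      obtain f where f: "\<forall>a b. dist (f a) (f b) = dist a b" "\<forall>i. ctr (P t) i = f (ctr p i)" by blast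
      show "\<exists>f. (\<forall>x y. dist (f x) (f y) = dist x y) \<and> (\<forall>i. ctr (P t) i = f (ctr p i) \<and> rad (P t) i = rad p i)"
        using f key t by blast
    qed
  qed
  then show ?thesis unfolding rigid_def by blast
qed


end
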